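(* Fix an integer $d\geq 3$ and $\rho<1$. There exists a constant $c=c(d,\rho)>0$ such that the following holds for all sufficiently large $n$. Let $G_n$ be a $d$-regular graph on $n$ vertices whose transition matrix has all eigenvalues other than $1$ of absolute value at most $\rho$, let $v\in G_n$, and let $G$ be obtained by adding a new vertex $v'$ and the edge $\{v,v'\}$. Let $(X_t),(Y_t)$ be independent simple random walks on $G$ with $X_0=u_1$, $Y_0=u_2$, where $u_1\neq v'$ and $u_2\neq v'$. Then $$\mathbb{P}_{u_1,u_2}\big(\exists\, t\leq n\wedge\tau^X_{v'}\wedge\tau^Y_{v'}\text{ such that }X_t=Y_t\big)\geq c.$$
   Context: $\tau^X_{v'}=\min\{t\geq1:X_t=v'\}$ and $\tau^Y_{v'}=\min\{t\geq 1:Y_t=v'\}$; $\mathbb{P}_{u_1,u_2}$ is the joint law of the two independent walks with the given starting points. *)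

theory Defs
  imports "HOL-Probability.Probability" "Jordan_Normal_Form.Char_Poly"
begin

text \<open>The graph G_n has vertex set {0..<n}; its adjacency relation is E (only its
restriction to {0..<n} matters).  It is a simple d-regular graph.\<close>

definition regular_graph :: "nat \<Rightarrow> nat \<Rightarrow> (nat \<Rightarrow> nat \<Rightarrow> bool) \<Rightarrow> bool" where
  "regular_graph n d E \<longleftrightarrow>
     (\<forall>x<n. \<forall>y<n. E x y \<longleftrightarrow> E y x) \<and> (\<forall>x<n. \<not> E x x) \<and>
     (\<forall>x<n. card {y. y < n \<and> E x y} = d)"

definition trans_mat :: "nat \<Rightarrow> nat \<Rightarrow> (nat \<Rightarrow> nat \<Rightarrow> bool) \<Rightarrow> complex mat" where
  "trans_mat n d E = mat n n (\<lambda>(i, j). if E i j then 1 / of_nat d else 0)"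

text \<open>All eigenvalues (counted with algebraic multiplicity) other than the
eigenvalue 1 (removed once) have absolute value at most rho.\<close>

definition spectral_bound :: "nat \<Rightarrow> nat \<Rightarrow> (nat \<Rightarrow> nat \<Rightarrow> bool) \<Rightarrow> real \<Rightarrow> bool" where
  "spectral_bound n d E \<rho> \<longleftrightarrow>
     (\<forall>z \<in> set_mset (proots (char_poly (trans_mat n d E)) - add_mset 1 0). cmod z \<le> \<rho>)"

text \<open>The graph G: G_n plus a new vertex v' = n joined only to v.\<close>

definition adjG :: "nat \<Rightarrow> (nat \<Rightarrow> nat \<Rightarrow> bool) \<Rightarrow> nat \<Rightarrow> nat \<Rightarrow> nat \<Rightarrow> bool" where
  "adjG n E v x y \<longleftrightarrow> (x < n \<and> y < n \<and> E x y) \<or> (x = v \<and> y = n) \<or> (x = n \<and> y = v)"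

text \<open>Law of the trajectory [X_0, ..., X_k] of simple random walk started at u,
with neighbourhoods given by adj.\<close>

fun walk :: "(nat \<Rightarrow> nat \<Rightarrow> bool) \<Rightarrow> nat \<Rightarrow> nat \<Rightarrow> nat list pmf" where
  "walk adj u 0 = return_pmf [u]"
| "walk adj u (Suc k) =
     walk adj u k \<bind> (\<lambda>xs. map_pmf (\<lambda>y. xs @ [y]) (pmf_of_set {y. adj (last xs) y}))"

text \<open>The event: there is t \<le> n with t \<le> tau^X_{v'} and t \<le> tau^Y_{v'}
(tau counting times \<ge> 1) and X_t = Y_t.\<close>

definition meet_event :: "nat \<Rightarrow> nat \<Rightarrow> (nat list \<times> nat list) set" where
  "meet_event n w = {(xs, ys). \<exists>t\<le>n.
      (\<forall>s. 1 \<le> s \<and> s < t \<longrightarrow> xs ! s \<noteq> w) \<and>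
      (\<forall>s. 1 \<le> s \<and> s < t \<longrightarrow> ys ! s \<noteq> w) \<and> xs ! t = ys ! t}"

definition meet_prob :: "nat \<Rightarrow> (nat \<Rightarrow> nat \<Rightarrow> bool) \<Rightarrow> nat \<Rightarrow> nat \<Rightarrow> nat \<Rightarrow> real" where
  "meet_prob n E v u1 u2 =
     measure_pmf.prob (pair_pmf (walk (adjG n E v) u1 n) (walk (adjG n E v) u2 n))
       (meet_event n n)"

end

theory Submission
  imports Defs "Jordan_Normal_Form.Schur_Decomposition"
begin

primrec pw :: "nat \<Rightarrow> (nat \<Rightarrow> nat \<Rightarrow> real) \<Rightarrow> nat \<Rightarrow> nat \<Rightarrow> nat \<Rightarrow> real" where
  "pw n P 0 x y = (if x = y then 1 else 0)"
| "pw n P (Suc k) x y = (\<Sum>w<n. pw n P k x w * P w y)"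

locale stoch =
  fixes n :: nat and P :: "nat \<Rightarrow> nat \<Rightarrow> real"
  assumes npos: "0 < n"
  and Pnn: "\<And>x y. 0 \<le> P x y"
  and Psym: "\<And>x y. x < n \<Longrightarrow> y < n \<Longrightarrow> P x y = P y x"
  and Prow: "\<And>x. x < n \<Longrightarrow> (\<Sum>y<n. P x y) = 1"
begin

abbreviation "p \<equiv> pw n P"

lemma pw_nonneg: "0 \<le> p k x y"
  by (induction k arbitrary: y) (auto intro!: sum_nonneg mult_nonneg_nonneg Pnn)

lemma pw_delta: "x < n \<Longrightarrow> (\<Sum>w<n. (if x = w then 1 else 0) * f w) = (f x :: real)"
proof -
  assume "x < n"
  have "(\<Sum>w<n. (if x = w then 1 else 0) * f w) = (\<Sum>w<n. if x = w then f w else 0)"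
    by (rule sum.cong) auto
  then show ?thesis using \<open>x < n\<close> by (simp add: sum.delta)
qed

lemma pw_delta': "y < n \<Longrightarrow> (\<Sum>w<n. f w * (if w = y then 1 else 0)) = (f y :: real)"
proof -
  assume "y < n"
  have "(\<Sum>w<n. f w * (if w = y then 1 else 0)) = (\<Sum>w<n. if w = y then f w else 0)"
    by (rule sum.cong) auto
  then show ?thesis using \<open>y < n\<close> by (simp add: sum.delta')
qed

lemma pw_add: "x < n \<Longrightarrow> y < n \<Longrightarrow> p (a + b) x y = (\<Sum>w<n. p a x w * p b w y)"
proof (induction b arbitrary: y)
  case 0
  then show ?case using pw_delta'[of y "\<lambda>w. p a x w"] by simp
next
  case (Suc b)
  have "p (a + Suc b) x y = (\<Sum>w<n. p (a+b) x w * P w y)" by simp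
  also have "\<dots> = (\<Sum>w<n. (\<Sum>w'<n. p a x w' * p b w' w) * P w y)"
    using Suc by simp
  also have "\<dots> = (\<Sum>w<n. \<Sum>w'<n. p a x w' * p b w' w * P w y)"
    by (simp add: sum_distrib_right)
  also have "\<dots> = (\<Sum>w'<n. \<Sum>w<n. p a x w' * p b w' w * P w y)"
    by (rule sum.swap)
  also have "\<dots> = (\<Sum>w'<n. p a x w' * (\<Sum>w<n. p b w' w * P w y))"
    by (simp add: sum_distrib_left mult.assoc)
  also have "\<dots> = (\<Sum>w'<n. p a x w' * p (Suc b) w' y)" by simp
  finally show ?case .
qed

lemma pw_row: "x < n \<Longrightarrow> (\<Sum>y<n. p k x y) = 1"
proof (induction k)
  case 0
  then show ?case by (simp add: sum.delta)
next
  case (Suc k)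
  have "(\<Sum>y<n. p (Suc k) x y) = (\<Sum>y<n. \<Sum>w<n. p k x w * P w y)"
    by simp
  also have "\<dots> = (\<Sum>w<n. \<Sum>y<n. p k x w * P w y)" by (rule sum.swap)
  also have "\<dots> = (\<Sum>w<n. p k x w * (\<Sum>y<n. P w y))"
    by (simp add: sum_distrib_left)
  also have "\<dots> = (\<Sum>w<n. p k x w)" by (simp add: Prow)
  finally show ?case using Suc by simp
qed

lemma pw_one: "y < n \<Longrightarrow> p 1 y w = P y w"
  using pw_delta[of y "\<lambda>w'. P w' w"] by (simp del: pw.simps add: pw.simps(2)[of _ _ 0] pw.simps(1))

lemma pw_sym: "x < n \<Longrightarrow> y < n \<Longrightarrow> p k x y = p k y x"
proof (induction k arbitrary: x y)
  case 0
  then show ?case by simp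
next
  case (Suc k)
  have "p (Suc k) y x = p (1 + k) y x" by simp
  also have "\<dots> = (\<Sum>w<n. p 1 y w * p k w x)" using Suc by (intro pw_add) auto
  also have "\<dots> = (\<Sum>w<n. p k x w * P w y)"
  proof (rule sum.cong)
    fix w assume w: "w \<in> {..<n}"
    have "p 1 y w = P y w" using Suc.prems(2) by (rule pw_one)
    moreover have "p k w x = p k x w" using Suc.IH[of w x] Suc.prems w by simp
    ultimately show "p 1 y w * p k w x = p k x w * P w y"
      using Psym[of y w] Suc.prems w by simp
  qed simp
  finally show ?case by simp
qed

lemma pw_col: "y < n \<Longrightarrow> (\<Sum>x<n. p k x y) = 1"
  using pw_row[of y k] by (simp add: pw_sym)

definition mm :: "nat \<Rightarrow> nat \<Rightarrow> nat \<Rightarrow> real" where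
  "mm k x y = (if k = 0 then (if x = y then 1 else 0) else p k x y - 1 / n)"

lemma mm_sym: "x < n \<Longrightarrow> y < n \<Longrightarrow> mm k x y = mm k y x"
  by (simp add: mm_def pw_sym)

lemma mm_add: assumes xy: "x < n" "y < n" shows "mm (a + b) x y = (\<Sum>w<n. mm a x w * mm b w y)"
proof (cases "a = 0 \<or> b = 0")
  case True
  show ?thesis
  proof (cases "a = 0")
    case True
    then show ?thesis using pw_delta[OF xy(1), of "\<lambda>w. mm b w y"] by (simp add: mm_def)
  next
    case False
    then have "b = 0" using \<open>a = 0 \<or> b = 0\<close> by simp
    then show ?thesis using pw_delta'[OF xy(2), of "\<lambda>w. mm a x w"] by (simp add: mm_def)
  qed
next
  case False
  have "(\<Sum>w<n. mm a x w * mm b w y) = (\<Sum>w<n. (p a x w - 1/n) * (p b w y - 1/n))"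
    using False by (simp add: mm_def)
  also have "\<dots> = (\<Sum>w<n. p a x w * p b w y) - (\<Sum>w<n. p a x w) / n - (\<Sum>w<n. p b w y) / n
      + (\<Sum>w<n. 1 / (real n * n))"
    by (simp add: algebra_simps sum_subtractf sum.distrib sum_divide_distrib)
  also have "\<dots> = p (a+b) x y - 1 / n"
    using xy npos by (simp add: pw_add pw_row pw_col field_simps)
  finally show ?thesis using False by (simp add: mm_def)
qed

lemma mm_sq: "x < n \<Longrightarrow> mm (2 * k) x x = (\<Sum>w<n. (mm k x w)\<^sup>2)"
proof -
  assume x: "x < n"
  have "mm (k + k) x x = (\<Sum>w<n. mm k x w * mm k w x)" by (rule mm_add[OF x x])
  also have "\<dots> = (\<Sum>w<n. (mm k x w)\<^sup>2)"
    using x by (intro sum.cong) (auto simp: mm_sym[of _ x] power2_eq_square)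
  finally show ?thesis by (simp add: mult_2)
qed

lemma mm_sq_nonneg: "x < n \<Longrightarrow> 0 \<le> mm (2 * k) x x"
  by (simp add: mm_sq sum_nonneg)

lemma mm_zero_next: assumes x: "x < n" and z: "mm (2 * j) x x = 0"
  shows "mm (2 * Suc j) x x = 0"
proof -
  have s0: "(\<Sum>w<n. (mm j x w)\<^sup>2) = 0" using z mm_sq[OF x, of j] by simp
  have "\<forall>w\<in>{..<n}. (mm j x w)\<^sup>2 = 0"
    using s0 sum_nonneg_eq_0_iff[of "{..<n}" "\<lambda>w. (mm j x w)\<^sup>2"] by simp
  then have zz: "\<And>w. w < n \<Longrightarrow> mm j x w = 0" by auto
  have "\<And>w. w < n \<Longrightarrow> mm (Suc j) x w = 0"
  proof -
    fix w assume w: "w < n"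
    have "mm (j + 1) x w = (\<Sum>y<n. mm j x y * mm 1 y w)" by (rule mm_add[OF x w])
    also have "\<dots> = 0" using zz by simp
    finally show "mm (Suc j) x w = 0" by simp
  qed
  then show ?thesis using mm_sq[OF x, of "Suc j"] by simp
qed

lemma mm_cs: assumes x: "x < n" shows "(mm (2 * Suc j) x x)\<^sup>2 \<le> mm (2 * j) x x * mm (2 * Suc (Suc j)) x x"
proof -
  have "mm (2 * Suc j) x x = mm (j + Suc (Suc j)) x x" by (simp add: mult_2)
  also have "\<dots> = (\<Sum>w<n. mm j x w * mm (Suc (Suc j)) w x)" by (rule mm_add[OF x x])
  also have "\<dots> = (\<Sum>w<n. mm j x w * mm (Suc (Suc j)) x w)"
    using x by (intro sum.cong refl) (metis lessThan_iff mm_sym)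
  finally have e: "mm (2 * Suc j) x x = (\<Sum>w<n. mm j x w * mm (Suc (Suc j)) x w)" .
  have cs: "(\<Sum>w<n. mm j x w * mm (Suc (Suc j)) x w)\<^sup>2 \<le> (\<Sum>w<n. (mm j x w)\<^sup>2) * (\<Sum>w<n. (mm (Suc (Suc j)) x w)\<^sup>2)"
    by (rule Cauchy_Schwarz_ineq_sum)
  have e1: "mm (2 * j) x x = (\<Sum>w<n. (mm j x w)\<^sup>2)" by (rule mm_sq[OF x])
  have e2: "mm (2 * Suc (Suc j)) x x = (\<Sum>w<n. (mm (Suc (Suc j)) x w)\<^sup>2)" by (rule mm_sq[OF x])
  show ?thesis using cs by (simp only: e e1 e2)
qed

lemma spec_diag:
  assumes r0: "0 \<le> \<rho>"
    and tr: "\<And>k. k \<ge> 1 \<Longrightarrow> (\<Sum>x<n. p k x x) - 1 \<le> real (n - 1) * \<rho> ^ k"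
    and x: "x < n"
  shows "mm (2 * k) x x \<le> \<rho> ^ (2 * k)"
proof -
  define a where "a j = mm (2 * j) x x" for j
  define q where "q = \<rho>\<^sup>2"
  have q0: "0 \<le> q" unfolding q_def by simp
  have qp: "\<rho> ^ (2 * j) = q ^ j" for j unfolding q_def by (simp add: power_mult)
  have a0: "0 \<le> a j" for j unfolding a_def by (rule mm_sq_nonneg[OF x])
  have aup: "a j \<le> n * q ^ j" for j
  proof (cases "j = 0")
    case True then show ?thesis using npos by (simp add: a_def mm_def)
  next
    case False
    have "(\<Sum>y<n. mm (2 * j) y y) = (\<Sum>y<n. p (2 * j) y y) - (\<Sum>y<n. 1 / real n)"
      using False by (simp add: mm_def sum_subtractf)
    also have "\<dots> = (\<Sum>y<n. p (2 * j) y y) - 1" using npos by simp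
    also have "\<dots> \<le> real (n - 1) * q ^ j" using tr[of "2 * j"] False by (simp add: qp)
    also have "\<dots> \<le> n * q ^ j" using q0 by (intro mult_right_mono) auto
    finally have s: "(\<Sum>y<n. mm (2 * j) y y) \<le> n * q ^ j" .
    have "mm (2 * j) x x \<le> (\<Sum>y<n. mm (2 * j) y y)"
      using x by (intro member_le_sum mm_sq_nonneg) auto
    with s show ?thesis by (simp add: a_def)
  qed
  have cs: "(a (Suc j))\<^sup>2 \<le> a j * a (Suc (Suc j))" for j unfolding a_def by (rule mm_cs[OF x])
  have zn: "a j = 0 \<Longrightarrow> a (Suc j) = 0" for j unfolding a_def by (rule mm_zero_next[OF x])
  have step: "a (Suc j) \<le> q * a j" for j
  proof (rule ccontr)
    assume "\<not> a (Suc j) \<le> q * a j"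
    then have gt: "a (Suc j) > q * a j" by simp
    have apos: "a j > 0"
    proof (rule ccontr)
      assume "\<not> a j > 0" then have "a j = 0" using a0[of j] by simp
      then show False using zn[of j] gt by simp
    qed
    define r where "r = a (Suc j) / a j"
    have rq: "r > q" using gt apos unfolding r_def by (simp add: field_simps)
    have r0: "r > 0" using rq q0 by simp
    have ind: "a (j + i) > 0 \<and> a (Suc (j + i)) \<ge> r * a (j + i)" for i
    proof (induction i)
      case 0 then show ?case using apos by (simp add: r_def)
    next
      case (Suc i)
      let ?x = "a (j + i)" and ?y = "a (Suc (j + i))" and ?z = "a (Suc (Suc (j + i)))"
      have ypos: "?y > 0" using Suc r0 by (smt (verit) mult_pos_pos)
      have "?y\<^sup>2 \<le> ?x * ?z" using cs[of "j + i"] by simp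
      moreover have "r * ?x \<le> ?y" using Suc by simp
      ultimately have "r * ?x * ?y \<le> ?x * ?z" using ypos
        by (smt (verit) mult_right_mono power2_eq_square)
      then have "?x * (r * ?y) \<le> ?x * ?z" by (simp add: algebra_simps)
      then have "r * ?y \<le> ?z" using Suc by (simp add: mult_le_cancel_left_pos)
      then show ?case using ypos by simp
    qed
    have grow: "a (j + i) \<ge> a j * r ^ i" for i
    proof (induction i)
      case 0 then show ?case by simp
    next
      case (Suc i)
      have "a j * r ^ Suc i = r * (a j * r ^ i)" by simp
      also have "\<dots> \<le> r * a (j + i)" using Suc r0 by (intro mult_left_mono) auto
      also have "\<dots> \<le> a (j + Suc i)" using ind[of i] by simp
      finally show ?case .
    qed
    have bnd: "a j * r ^ i \<le> n * q ^ j * q ^ i" for i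
      using grow[of i] aup[of "j + i"] by (simp add: power_add)
    show False
    proof (cases "q = 0")
      case True
      then show False using bnd[of 1] mult_pos_pos[OF apos r0] by simp
    next
      case False
      then have qpos: "q > 0" using q0 by simp
      have "1 < r / q" using rq qpos by simp
      then obtain i where i: "n * q ^ j / a j < (r / q) ^ i" using real_arch_pow by blast
      have "(r / q) ^ i * (q ^ i * a j) = a j * r ^ i" using qpos
        by (simp add: power_divide field_simps)
      also have "\<dots> \<le> n * q ^ j * q ^ i" by (rule bnd)
      finally have "((r / q) ^ i * a j) * q ^ i \<le> (n * q ^ j) * q ^ i"
        by (simp add: algebra_simps)
      then have "(r / q) ^ i * a j \<le> n * q ^ j"
        using qpos by (simp add: mult_le_cancel_right_pos)
      then have "(r / q) ^ i \<le> n * q ^ j / a j"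
        using apos by (simp add: pos_le_divide_eq)
      with i show False by simp
    qed
  qed
  have "a k \<le> q ^ k"
  proof (induction k)
    case 0 then show ?case by (simp add: a_def mm_def)
  next
    case (Suc k)
    have "a (Suc k) \<le> q * a k" by (rule step)
    also have "\<dots> \<le> q * q ^ k" using Suc q0 by (intro mult_left_mono) auto
    finally show ?case by simp
  qed
  then show ?thesis by (simp add: a_def qp)
qed

lemma spec_entry:
  assumes r0: "0 \<le> \<rho>"
    and tr: "\<And>k. k \<ge> 1 \<Longrightarrow> (\<Sum>x<n. p k x x) - 1 \<le> real (n - 1) * \<rho> ^ k"
    and x: "x < n" and y: "y < n"
  shows "\<bar>mm k x y\<bar> \<le> \<rho> ^ k"
proof -
  define a where "a = k div 2"
  define b where "b = k - a"
  have k: "k = a + b" unfolding a_def b_def by simp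
  have e: "mm k x y = (\<Sum>w<n. mm a x w * mm b y w)"
    unfolding k mm_add[OF x y] using y by (intro sum.cong refl) (metis lessThan_iff mm_sym)
  have "(mm k x y)\<^sup>2 \<le> (\<Sum>w<n. (mm a x w)\<^sup>2) * (\<Sum>w<n. (mm b y w)\<^sup>2)"
    unfolding e by (rule Cauchy_Schwarz_ineq_sum)
  also have "\<dots> = mm (2 * a) x x * mm (2 * b) y y" by (simp add: mm_sq x y)
  also have "\<dots> \<le> \<rho> ^ (2 * a) * \<rho> ^ (2 * b)"
    by (intro mult_mono spec_diag[OF r0 tr] mm_sq_nonneg x y) auto
  also have "\<dots> = (\<rho> ^ k)\<^sup>2" by (simp add: k power_add power_mult_distrib power_mult[symmetric] mult.commute)
  finally have "(mm k x y)\<^sup>2 \<le> (\<rho> ^ k)\<^sup>2" .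
  then have "\<bar>mm k x y\<bar> \<le> \<bar>\<rho> ^ k\<bar>" by (simp only: abs_le_square_iff)
  then show ?thesis using r0 by simp
qed

lemma pw_close:
  assumes r0: "0 \<le> \<rho>"
    and tr: "\<And>k. k \<ge> 1 \<Longrightarrow> (\<Sum>x<n. p k x x) - 1 \<le> real (n - 1) * \<rho> ^ k"
    and x: "x < n" and y: "y < n" and k: "k \<ge> 1"
  shows "\<bar>p k x y - 1 / n\<bar> \<le> \<rho> ^ k"
  using spec_entry[OF r0 tr x y, of k] k by (simp add: mm_def)

lemma pw_upper:
  assumes r0: "0 \<le> \<rho>"
    and tr: "\<And>k. k \<ge> 1 \<Longrightarrow> (\<Sum>x<n. p k x x) - 1 \<le> real (n - 1) * \<rho> ^ k"
    and x: "x < n" and y: "y < n"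
  shows "p k x y \<le> 1 / n + \<rho> ^ k"
proof (cases "k = 0")
  case True then show ?thesis by simp
next
  case False then show ?thesis using pw_close[OF r0 tr x y, of k] by simp
qed

end


definition mtr :: "complex mat \<Rightarrow> complex" where
  "mtr M = (\<Sum>i<dim_row M. M $$ (i, i))"

lemma mtr_comm:
  assumes X: "X \<in> carrier_mat n m" and Y: "Y \<in> carrier_mat m n"
  shows "mtr (X * Y) = mtr (Y * X)"
proof -
  have "mtr (X * Y) = (\<Sum>i<n. \<Sum>l<m. X $$ (i, l) * Y $$ (l, i))"
    using X Y by (simp add: mtr_def scalar_prod_def lessThan_atLeast0)
  also have "\<dots> = (\<Sum>l<m. \<Sum>i<n. Y $$ (l, i) * X $$ (i, l))"
    by (subst sum.swap) (simp add: mult.commute)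
  also have "\<dots> = mtr (Y * X)"
    using X Y by (simp add: mtr_def scalar_prod_def lessThan_atLeast0)
  finally show ?thesis .
qed

lemma ut_pow:
  assumes B: "B \<in> carrier_mat n n" and ut: "upper_triangular B"
  shows "upper_triangular (B ^\<^sub>m k) \<and> (\<forall>i<n. (B ^\<^sub>m k) $$ (i, i) = (B $$ (i, i)) ^ k)"
proof (induction k)
  case 0
  then show ?case using B by auto
next
  case (Suc k)
  let ?C = "B ^\<^sub>m k"
  have C: "?C \<in> carrier_mat n n" using B by simp
  have uC: "\<And>i j. i < n \<Longrightarrow> j < i \<Longrightarrow> ?C $$ (i, j) = 0"
    using Suc C unfolding upper_triangular_def by auto
  have uB: "\<And>i j. i < n \<Longrightarrow> j < i \<Longrightarrow> B $$ (i, j) = 0"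
    using ut B unfolding upper_triangular_def by auto
  have prod: "(?C * B) $$ (i, j) = (\<Sum>l<n. ?C $$ (i, l) * B $$ (l, j))" if "i < n" "j < n" for i j
    using that C B by (simp add: scalar_prod_def lessThan_atLeast0)
  have "upper_triangular (?C * B)"
    unfolding upper_triangular_def
  proof (intro allI impI)
    fix i j assume ij: "i < dim_row (?C * B)" "j < i"
    then have i: "i < n" using C B by simp
    have "(\<Sum>l<n. ?C $$ (i, l) * B $$ (l, j)) = 0"
    proof (rule sum.neutral, intro ballI)
      fix l assume "l \<in> {..<n}"
      then show "?C $$ (i, l) * B $$ (l, j) = 0"
        using uC[of i l] uB[of l j] ij i by (cases "l < i") auto
    qed
    then show "(?C * B) $$ (i, j) = 0" using prod[of i j] i ij by simp
  qed
  moreover have "(?C * B) $$ (i, i) = (B $$ (i, i)) ^ Suc k" if i: "i < n" for i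
  proof -
    have "(\<Sum>l<n. ?C $$ (i, l) * B $$ (l, i)) = (\<Sum>l<n. if l = i then ?C $$ (i, i) * B $$ (i, i) else 0)"
    proof (rule sum.cong, simp)
      fix l assume "l \<in> {..<n}"
      then show "?C $$ (i, l) * B $$ (l, i) = (if l = i then ?C $$ (i, i) * B $$ (i, i) else 0)"
        using uC[of i l] uB[of l i] i by (cases "l < i"; cases "l = i") auto
    qed
    also have "\<dots> = ?C $$ (i, i) * B $$ (i, i)" using i by simp
    finally show ?thesis using prod[OF i i] Suc i by (simp del: power_Suc add: power_Suc2)
  qed
  ultimately show ?case by simp
qed


definition Pr :: "nat \<Rightarrow> (nat \<Rightarrow> nat \<Rightarrow> bool) \<Rightarrow> nat \<Rightarrow> nat \<Rightarrow> real" where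
  "Pr d E x y = (if E x y then 1 / real d else 0)"

lemma Pr_row:
  assumes reg: "regular_graph n d E" and d: "d > 0" and x: "x < n"
  shows "(\<Sum>y<n. Pr d E x y) = 1"
proof -
  have "(\<Sum>y\<in>{y\<in>{..<n}. E x y}. 1 / real d) = (\<Sum>y<n. if E x y then 1 / real d else 0)"
    by (rule sum.inter_filter) simp
  then have "(\<Sum>y<n. Pr d E x y) = (\<Sum>y\<in>{y\<in>{..<n}. E x y}. 1 / real d)"
    by (simp add: Pr_def)
  also have "{y\<in>{..<n}. E x y} = {y. y < n \<and> E x y}" by auto
  also have "card \<dots> = d" using reg x unfolding regular_graph_def by auto
  then have "(\<Sum>y\<in>{y. y < n \<and> E x y}. 1 / real d) = 1" using d by simp
  finally show ?thesis .
qed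

lemma Pr_stoch:
  assumes reg: "regular_graph n d E" and d: "d > 0" and n: "n > 0"
  shows "stoch n (Pr d E)"
  using assms Pr_row[OF reg d]
  by unfold_locales (auto simp: Pr_def regular_graph_def)

lemma trans_mat_carrier: "trans_mat n d E \<in> carrier_mat n n"
  by (simp add: trans_mat_def)

lemma trans_mat_entry: "i < n \<Longrightarrow> j < n \<Longrightarrow> trans_mat n d E $$ (i, j) = complex_of_real (Pr d E i j)"
  by (simp add: trans_mat_def Pr_def)

lemma trans_pow:
  assumes i: "i < n" and j: "j < n"
  shows "(trans_mat n d E ^\<^sub>m k) $$ (i, j) = complex_of_real (pw n (Pr d E) k i j)"
  using j
proof (induction k arbitrary: j)
  case 0
  then show ?case using i by (simp add: trans_mat_def)
next
  case (Suc k)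
  let ?A = "trans_mat n d E"
  have C: "?A ^\<^sub>m k \<in> carrier_mat n n" by (simp add: trans_mat_carrier)
  have dd: "dim_row (?A ^\<^sub>m k) = n" "dim_col ?A = n" "dim_row ?A = n" using C by (auto simp: trans_mat_def)
  have "(?A ^\<^sub>m Suc k) $$ (i, j) = row (?A ^\<^sub>m k) i \<bullet> col ?A j"
    using dd i Suc.prems by simp
  also have "\<dots> = (\<Sum>l<n. (?A ^\<^sub>m k) $$ (i, l) * ?A $$ (l, j))"
    using C i Suc.prems dd by (simp add: scalar_prod_def lessThan_atLeast0)
  also have "\<dots> = (\<Sum>l<n. complex_of_real (pw n (Pr d E) k i l * Pr d E l j))"
    using Suc by (intro sum.cong refl) (simp add: trans_mat_entry)
  also have "\<dots> = complex_of_real (pw n (Pr d E) (Suc k) i j)" by simp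
  finally show ?case .
qed

lemma msum_bound:
  assumes "\<forall>z\<in>#R. cmod z \<le> \<rho>"
  shows "cmod (sum_mset (image_mset (\<lambda>z. z ^ k) R)) \<le> real (size R) * \<rho> ^ k"
  using assms
proof (induction R)
  case empty
  then show ?case by simp
next
  case (add z R)
  have "cmod (z ^ k) \<le> \<rho> ^ k"
    using add.prems by (simp add: norm_power power_mono)
  moreover have "cmod (sum_mset (image_mset (\<lambda>z. z ^ k) R)) \<le> real (size R) * \<rho> ^ k"
    using add by simp
  ultimately show ?case
    using norm_triangle_ineq[of "z ^ k" "sum_mset (image_mset (\<lambda>z. z ^ k) R)"]
    by (simp add: algebra_simps)
qed

lemma proots_lin: "proots (\<Prod>a\<leftarrow>as. [:- a, 1:]) = mset (as :: complex list)"
proof (induction as)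
  case Nil
  then show ?case by simp
next
  case (Cons a as)
  have nz: "(\<Prod>a\<leftarrow>as. [:- a, 1:]) \<noteq> (0 :: complex poly)"
    using prod_list_zero_iff[of "map (\<lambda>a. [:- a, 1:]) as"] by auto
  have "proots (\<Prod>a\<leftarrow>a # as. [:- a, 1:]) = proots ([:- a, 1:] * (\<Prod>a\<leftarrow>as. [:- a, 1:]))"
    by (simp only: list.map prod_list.Cons)
  also have "\<dots> = proots [:- a, 1:] + proots (\<Prod>a\<leftarrow>as. [:- a, 1:])"
    by (rule proots_mult) (use nz in auto)
  finally have "proots (\<Prod>a\<leftarrow>a # as. [:- a, 1:]) = proots [:- a, 1:] + proots (\<Prod>a\<leftarrow>as. [:- a, 1:])" .
  then show ?case using Cons by simp
qed

lemma prod_one_minus: "(\<Prod>a\<leftarrow>as. 1 - a) = (0::complex) \<Longrightarrow> 1 \<in> set as"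
  by (induction as) auto

lemma trace_bound:
  assumes reg: "regular_graph n d E" and d: "d > 0" and n: "n > 0"
    and sb: "spectral_bound n d E \<rho>"
  shows "(\<Sum>x<n. pw n (Pr d E) k x x) - 1 \<le> real (n - 1) * \<rho> ^ k"
proof -
  let ?A = "trans_mat n d E"
  have A: "?A \<in> carrier_mat n n" by (rule trans_mat_carrier)
  obtain as where cp: "char_poly ?A = (\<Prod>a\<leftarrow>as. [:- a, 1:])" and len: "length as = n"
    using char_poly_factorized[OF A] by blast
  obtain B Pm Q where sd: "schur_decomposition ?A as = (B, Pm, Q)" by (cases "schur_decomposition ?A as") auto
  from schur_decomposition[OF A cp sd]
  have sim: "similar_mat_wit ?A B Pm Q" and ut: "upper_triangular B" and dg: "diag_mat B = as" by auto
  have dimA: "dim_row ?A = n" using A by simp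
  note sD = similar_mat_witD[OF dimA[symmetric] sim]
  have simk: "similar_mat_wit (?A ^\<^sub>m k) (B ^\<^sub>m k) Pm Q" by (rule similar_mat_wit_pow[OF sim])
  have dimAk: "dim_row (?A ^\<^sub>m k) = n" using A by simp
  note sDk = similar_mat_witD[OF dimAk[symmetric] simk]
  have Bk: "B ^\<^sub>m k \<in> carrier_mat n n" using sD by simp
  have "mtr (?A ^\<^sub>m k) = mtr (Pm * (B ^\<^sub>m k * Q))"
    using sDk sD Bk by (simp add: assoc_mult_mat[of Pm n n _ n Q n])
  also have "\<dots> = mtr ((B ^\<^sub>m k * Q) * Pm)"
    using sD Bk by (intro mtr_comm[of _ n n]) auto
  also have "\<dots> = mtr (B ^\<^sub>m k)"
    using sD Bk by (simp add: assoc_mult_mat[of _ n n Q n Pm n])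
  also have "\<dots> = (\<Sum>i<n. (B $$ (i, i)) ^ k)"
    using ut_pow[of B n k] sD ut Bk by (simp add: mtr_def)
  also have "\<dots> = (\<Sum>i<n. (as ! i) ^ k)"
    using dg sD by (intro sum.cong refl) (auto simp: diag_mat_def)
  also have "\<dots> = sum_list (map (\<lambda>a. a ^ k) as)"
    using len by (simp add: sum_list_sum_nth lessThan_atLeast0)
  also have "\<dots> = sum_mset (image_mset (\<lambda>a. a ^ k) (mset as))"
    by (metis mset_map sum_mset_sum_list)
  finally have tr1: "mtr (?A ^\<^sub>m k) = sum_mset (image_mset (\<lambda>a. a ^ k) (mset as))" .
  have tr2: "mtr (?A ^\<^sub>m k) = complex_of_real (\<Sum>x<n. pw n (Pr d E) k x x)"
    using A by (simp add: mtr_def trans_pow)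
  define v :: "complex vec" where "v = vec n (\<lambda>_. 1)"
  have Av: "?A *\<^sub>v v = 1 \<cdot>\<^sub>v v"
  proof (rule eq_vecI)
    fix i assume "i < dim_vec (1 \<cdot>\<^sub>v v)"
    then have i: "i < n" by (simp add: v_def)
    have "(?A *\<^sub>v v) $ i = (\<Sum>j<n. ?A $$ (i, j) * v $ j)"
      using A i by (simp add: scalar_prod_def lessThan_atLeast0 v_def)
    also have "\<dots> = (\<Sum>j<n. complex_of_real (Pr d E i j))"
      using i by (intro sum.cong refl) (simp add: trans_mat_entry v_def)
    also have "\<dots> = 1" using Pr_row[OF reg d i] by (simp flip: of_real_sum)
    finally show "(?A *\<^sub>v v) $ i = (1 \<cdot>\<^sub>v v) $ i" using i by (simp add: v_def)
  qed (simp add: v_def A trans_mat_def)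
  have "v \<noteq> 0\<^sub>v n"
  proof
    assume "v = 0\<^sub>v n"
    then have "v $ 0 = 0" using n by simp
    then show False using n by (simp add: v_def)
  qed
  then have "eigenvector ?A v 1" using Av dimA by (simp add: eigenvector_def v_def)
  then have "eigenvalue ?A 1" by (auto simp: eigenvalue_def)
  then have e0: "poly (char_poly ?A) 1 = 0" using eigenvalue_root_char_poly[OF A] by simp
  have e1: "poly (\<Prod>a\<leftarrow>as. [:- a, 1:]) 1 = (\<Prod>a\<leftarrow>as. 1 - a)"
    by (induction as) (auto simp: algebra_simps)
  have "(\<Prod>a\<leftarrow>as. 1 - a) = (0::complex)" unfolding e1[symmetric] cp[symmetric] by (rule e0)
  then have "1 \<in> set as" by (rule prod_one_minus)
  then have mas: "mset as = add_mset 1 (mset as - {#1#})" by (intro insert_DiffM[symmetric]) simp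
  define R where "R = mset as - {#1#}"
  have masR: "mset as = add_mset 1 R" unfolding R_def by (rule mas)
  have pr: "proots (char_poly ?A) - add_mset 1 0 = R" unfolding cp proots_lin R_def by simp
  have Rb: "\<forall>z\<in>#R. cmod z \<le> \<rho>" using sb unfolding spectral_bound_def pr by simp
  have sR: "size R = n - 1" using arg_cong[OF masR, of size] len by simp
  have "sum_mset (image_mset (\<lambda>a. a ^ k) (mset as)) = 1 + sum_mset (image_mset (\<lambda>a. a ^ k) R)"
    unfolding masR by simp
  then have "complex_of_real (\<Sum>x<n. pw n (Pr d E) k x x) = 1 + sum_mset (image_mset (\<lambda>a. a ^ k) R)"
    using tr1 tr2 by simp
  then have "(\<Sum>x<n. pw n (Pr d E) k x x) - 1 = Re (sum_mset (image_mset (\<lambda>a. a ^ k) R))"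
    by (metis Re_complex_of_real add_diff_cancel_left' minus_complex.sel one_complex.sel)
  also have "\<dots> \<le> cmod (sum_mset (image_mset (\<lambda>a. a ^ k) R))" by (rule complex_Re_le_cmod)
  also have "\<dots> \<le> real (size R) * \<rho> ^ k" by (rule msum_bound[OF Rb])
  finally show ?thesis using sR by simp
qed


definition paths :: "nat \<Rightarrow> nat \<Rightarrow> nat list set" where
  "paths n m = {xs. set xs \<subseteq> {..<n} \<and> length xs = Suc m}"

definition pn :: "(nat \<Rightarrow> nat \<Rightarrow> real) \<Rightarrow> nat \<Rightarrow> nat list \<Rightarrow> real" where
  "pn P u xs = (if xs ! 0 = u then (\<Prod>i<length xs - 1. P (xs ! i) (xs ! Suc i)) else 0)"

lemma finite_paths: "finite (paths n m)"
  unfolding paths_def by (rule finite_lists_length_eq) simp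

lemma paths_nth: assumes "xs \<in> paths n m" "i \<le> m" shows "xs ! i < n"
proof -
  have "i < length xs" using assms by (simp add: paths_def)
  then have "xs ! i \<in> set xs" by (rule nth_mem)
  then show ?thesis using assms(1) by (auto simp: paths_def)
qed

lemma paths_0: "paths n 0 = (\<lambda>x. [x]) ` {..<n}"
proof (intro equalityI subsetI)
  fix xs assume xs: "xs \<in> paths n 0"
  then have "length xs = 1" by (simp add: paths_def)
  then obtain x where x: "xs = [x]" by (cases xs) auto
  then have "x < n" using xs by (simp add: paths_def)
  then show "xs \<in> (\<lambda>x. [x]) ` {..<n}" using x by simp
next
  fix xs assume "xs \<in> (\<lambda>x. [x]) ` {..<n}"
  then show "xs \<in> paths n 0" by (auto simp: paths_def)
qed

lemma paths_Suc: "paths n (Suc m) = (\<lambda>(xs, y). xs @ [y]) ` (paths n m \<times> {..<n})"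
proof
  show "paths n (Suc m) \<subseteq> (\<lambda>(xs, y). xs @ [y]) ` (paths n m \<times> {..<n})"
  proof
    fix zs assume z: "zs \<in> paths n (Suc m)"
    then have "zs \<noteq> []" by (auto simp: paths_def)
    then have "zs = butlast zs @ [last zs]" by simp
    moreover have "butlast zs \<in> paths n m" "last zs < n"
      using z \<open>zs \<noteq> []\<close> by (auto simp: paths_def dest: in_set_butlastD) (metis last_in_set lessThan_iff subsetD)
    ultimately show "zs \<in> (\<lambda>(xs, y). xs @ [y]) ` (paths n m \<times> {..<n})"
      by (metis (no_types, lifting) SigmaI lessThan_iff pair_imageI)
  qed
next
  show "(\<lambda>(xs, y). xs @ [y]) ` (paths n m \<times> {..<n}) \<subseteq> paths n (Suc m)"
    by (auto simp: paths_def)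
qed

lemma inj_snoc: "inj_on (\<lambda>(xs, y). xs @ [y]) A"
  by (auto simp: inj_on_def)

lemma pn_snoc:
  assumes "xs \<in> paths n m"
  shows "pn P u (xs @ [y]) = pn P u xs * P (xs ! m) y"
proof -
  have l: "length xs = Suc m" using assms by (simp add: paths_def)
  have "(\<Prod>i<Suc m. P ((xs @ [y]) ! i) ((xs @ [y]) ! Suc i))
      = (\<Prod>i<m. P ((xs @ [y]) ! i) ((xs @ [y]) ! Suc i)) * P ((xs @ [y]) ! m) ((xs @ [y]) ! Suc m)"
    by simp
  also have "(\<Prod>i<m. P ((xs @ [y]) ! i) ((xs @ [y]) ! Suc i)) = (\<Prod>i<m. P (xs ! i) (xs ! Suc i))"
    using l by (intro prod.cong refl) (simp add: nth_append)
  also have "P ((xs @ [y]) ! m) ((xs @ [y]) ! Suc m) = P (xs ! m) y"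
    using l by (simp add: nth_append)
  finally have "(\<Prod>i<Suc m. P ((xs @ [y]) ! i) ((xs @ [y]) ! Suc i)) = (\<Prod>i<m. P (xs ! i) (xs ! Suc i)) * P (xs ! m) y" .
  moreover have "(xs @ [y]) ! 0 = xs ! 0" using l by (simp add: nth_append)
  ultimately show ?thesis using l by (simp add: pn_def)
qed

context stoch
begin

lemma last_step:
  "(\<Sum>xs\<in>paths n (Suc m). pn P u xs * F xs) = (\<Sum>xs\<in>paths n m. pn P u xs * (\<Sum>y<n. P (xs ! m) y * F (xs @ [y])))"
proof -
  have "(\<Sum>xs\<in>paths n (Suc m). pn P u xs * F xs) = (\<Sum>(xs, y)\<in>paths n m \<times> {..<n}. pn P u (xs @ [y]) * F (xs @ [y]))"
    unfolding paths_Suc by (subst sum.reindex[OF inj_snoc]) (simp add: case_prod_beta)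
  also have "\<dots> = (\<Sum>xs\<in>paths n m. \<Sum>y<n. pn P u (xs @ [y]) * F (xs @ [y]))"
    by (rule sum.cartesian_product[symmetric])
  also have "\<dots> = (\<Sum>xs\<in>paths n m. pn P u xs * (\<Sum>y<n. P (xs ! m) y * F (xs @ [y])))"
    by (intro sum.cong refl) (simp add: pn_snoc sum_distrib_left mult.assoc)
  finally show ?thesis .
qed

lemma p0_sum: "(\<Sum>w<n. \<Sum>z<n. c w * p 0 w z * \<phi> w z) = (\<Sum>w<n. c w * \<phi> w w)"
proof (intro sum.cong refl)
  fix w assume w: "w \<in> {..<n}"
  have "(\<Sum>z<n. c w * p 0 w z * \<phi> w z) = (\<Sum>z<n. if z = w then c w * \<phi> w w else 0)"
    by (rule sum.cong) auto
  also have "\<dots> = c w * \<phi> w w" using w by simp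
  finally show "(\<Sum>z<n. c w * p 0 w z * \<phi> w z) = c w * \<phi> w w" .
qed

lemma ST: "u < n \<Longrightarrow> t \<le> m \<Longrightarrow> (\<Sum>xs\<in>paths n m. pn P u xs * h (xs ! t)) = (\<Sum>z<n. p t u z * h z)"
proof (induction m arbitrary: t h)
  case 0
  then have t: "t = 0" by simp
  have "(\<Sum>xs\<in>paths n 0. pn P u xs * h (xs ! t)) = (\<Sum>x<n. pn P u [x] * h x)"
    unfolding paths_0 t by (subst sum.reindex) (auto simp: inj_on_def)
  also have "\<dots> = (\<Sum>x<n. (if u = x then 1 else 0) * h x)"
    by (intro sum.cong refl) (auto simp: pn_def)
  also have "\<dots> = h u" by (rule pw_delta[OF 0(1)])
  finally show ?case using 0 t pw_delta[of u h] by simp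
next
  case (Suc m)
  show ?case
  proof (cases "t \<le> m")
    case True
    have "(\<Sum>xs\<in>paths n (Suc m). pn P u xs * h (xs ! t))
        = (\<Sum>xs\<in>paths n m. pn P u xs * (\<Sum>y<n. P (xs ! m) y * h ((xs @ [y]) ! t)))"
      by (rule last_step)
    also have "\<dots> = (\<Sum>xs\<in>paths n m. pn P u xs * h (xs ! t))"
    proof (intro sum.cong refl)
      fix xs assume xs: "xs \<in> paths n m"
      then have "length xs = Suc m" by (simp add: paths_def)
      then have "(\<Sum>y<n. P (xs ! m) y * h ((xs @ [y]) ! t)) = (\<Sum>y<n. P (xs ! m) y) * h (xs ! t)"
        using True by (simp add: nth_append sum_distrib_right)
      also have "\<dots> = h (xs ! t)" using Prow[OF paths_nth[OF xs, of m]] by simp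
      finally show "pn P u xs * (\<Sum>y<n. P (xs ! m) y * h ((xs @ [y]) ! t)) = pn P u xs * h (xs ! t)" by simp
    qed
    also have "\<dots> = (\<Sum>z<n. p t u z * h z)" using Suc True by blast
    finally show ?thesis .
  next
    case False
    then have t: "t = Suc m" using Suc.prems by simp
    have "(\<Sum>xs\<in>paths n (Suc m). pn P u xs * h (xs ! t))
        = (\<Sum>xs\<in>paths n m. pn P u xs * (\<Sum>y<n. P (xs ! m) y * h ((xs @ [y]) ! t)))"
      by (rule last_step)
    also have "\<dots> = (\<Sum>xs\<in>paths n m. pn P u xs * (\<lambda>w. \<Sum>y<n. P w y * h y) (xs ! m))"
    proof (intro sum.cong refl)
      fix xs assume xs: "xs \<in> paths n m"
      then have "length xs = Suc m" by (simp add: paths_def)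
      then show "pn P u xs * (\<Sum>y<n. P (xs ! m) y * h ((xs @ [y]) ! t)) = pn P u xs * (\<lambda>w. \<Sum>y<n. P w y * h y) (xs ! m)"
        using t by (simp add: nth_append)
    qed
    also have "\<dots> = (\<Sum>w<n. p m u w * (\<Sum>y<n. P w y * h y))" using Suc.IH[of m] Suc.prems by simp
    also have "\<dots> = (\<Sum>w<n. \<Sum>y<n. p m u w * P w y * h y)"
      by (simp add: sum_distrib_left mult.assoc)
    also have "\<dots> = (\<Sum>y<n. \<Sum>w<n. p m u w * P w y * h y)" by (rule sum.swap)
    also have "\<dots> = (\<Sum>y<n. p t u y * h y)"
      using t by (simp add: sum_distrib_right)
    finally show ?thesis .
  qed
qed

lemma TT: "u < n \<Longrightarrow> s \<le> t \<Longrightarrow> t \<le> m \<Longrightarrow>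
   (\<Sum>xs\<in>paths n m. pn P u xs * \<phi> (xs ! s) (xs ! t)) = (\<Sum>w<n. \<Sum>z<n. p s u w * p (t - s) w z * \<phi> w z)"
proof (induction m arbitrary: t \<phi>)
  case 0
  then have t: "t = 0" "s = 0" by auto
  have "(\<Sum>xs\<in>paths n 0. pn P u xs * \<phi> (xs ! s) (xs ! t)) = (\<Sum>z<n. p 0 u z * \<phi> z z)"
    using ST[of u 0 0 "\<lambda>z. \<phi> z z"] 0 t by simp
  also have "\<dots> = (\<Sum>w<n. \<Sum>z<n. p s u w * p (t - s) w z * \<phi> w z)"
    using t p0_sum[of "\<lambda>w. p 0 u w" \<phi>] by simp
  finally show ?case .
next
  case (Suc m)
  show ?case
  proof (cases "t \<le> m")
    case True
    have "(\<Sum>xs\<in>paths n (Suc m). pn P u xs * \<phi> (xs ! s) (xs ! t))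
        = (\<Sum>xs\<in>paths n m. pn P u xs * (\<Sum>y<n. P (xs ! m) y * \<phi> ((xs @ [y]) ! s) ((xs @ [y]) ! t)))"
      by (rule last_step)
    also have "\<dots> = (\<Sum>xs\<in>paths n m. pn P u xs * \<phi> (xs ! s) (xs ! t))"
    proof (intro sum.cong refl)
      fix xs assume xs: "xs \<in> paths n m"
      then have "length xs = Suc m" by (simp add: paths_def)
      then have "(\<Sum>y<n. P (xs ! m) y * \<phi> ((xs @ [y]) ! s) ((xs @ [y]) ! t)) = (\<Sum>y<n. P (xs ! m) y) * \<phi> (xs ! s) (xs ! t)"
        using True Suc.prems by (simp add: nth_append sum_distrib_right)
      also have "\<dots> = \<phi> (xs ! s) (xs ! t)" using Prow[OF paths_nth[OF xs, of m]] by simp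
      finally show "pn P u xs * (\<Sum>y<n. P (xs ! m) y * \<phi> ((xs @ [y]) ! s) ((xs @ [y]) ! t)) = pn P u xs * \<phi> (xs ! s) (xs ! t)" by simp
    qed
    also have "\<dots> = (\<Sum>w<n. \<Sum>z<n. p s u w * p (t - s) w z * \<phi> w z)"
      by (rule Suc.IH[of t \<phi>]) (use Suc.prems True in auto)
    finally show ?thesis .
  next
    case False
    then have t: "t = Suc m" using Suc.prems by simp
    show ?thesis
    proof (cases "s = t")
      case True
      have "(\<Sum>xs\<in>paths n (Suc m). pn P u xs * \<phi> (xs ! s) (xs ! t)) = (\<Sum>z<n. p t u z * \<phi> z z)"
        using ST[of u t "Suc m" "\<lambda>z. \<phi> z z"] Suc.prems True t by simp
      also have "\<dots> = (\<Sum>w<n. \<Sum>z<n. p s u w * p (t - s) w z * \<phi> w z)"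
        using True p0_sum[of "\<lambda>w. p t u w" \<phi>] by simp
      finally show ?thesis .
    next
      case False
      then have sm: "s \<le> m" using t Suc.prems by simp
      have "(\<Sum>xs\<in>paths n (Suc m). pn P u xs * \<phi> (xs ! s) (xs ! t))
          = (\<Sum>xs\<in>paths n m. pn P u xs * (\<Sum>y<n. P (xs ! m) y * \<phi> ((xs @ [y]) ! s) ((xs @ [y]) ! t)))"
        by (rule last_step)
      also have "\<dots> = (\<Sum>xs\<in>paths n m. pn P u xs * (\<Sum>y<n. P (xs ! m) y * \<phi> (xs ! s) y))"
      proof (rule sum.cong[OF refl])
        fix xs assume xs: "xs \<in> paths n m"
        then have "length xs = Suc m" by (simp add: paths_def)
        then show "pn P u xs * (\<Sum>y<n. P (xs ! m) y * \<phi> ((xs @ [y]) ! s) ((xs @ [y]) ! t))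
            = pn P u xs * (\<Sum>y<n. P (xs ! m) y * \<phi> (xs ! s) y)"
          using t sm by (simp add: nth_append)
      qed
      also have "\<dots> = (\<Sum>w<n. \<Sum>z'<n. p s u w * p (m - s) w z' * (\<Sum>y<n. P z' y * \<phi> w y))"
        by (rule Suc.IH[of m "\<lambda>w z'. \<Sum>y<n. P z' y * \<phi> w y"]) (use Suc.prems sm in auto)
      also have "\<dots> = (\<Sum>w<n. \<Sum>y<n. p s u w * p (t - s) w y * \<phi> w y)"
      proof (rule sum.cong[OF refl])
        fix w
        have "(\<Sum>z'<n. p s u w * p (m - s) w z' * (\<Sum>y<n. P z' y * \<phi> w y))
            = (\<Sum>z'<n. \<Sum>y<n. p s u w * (p (m - s) w z' * P z' y) * \<phi> w y)"
          by (simp add: sum_distrib_left mult.assoc)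
        also have "\<dots> = (\<Sum>y<n. \<Sum>z'<n. p s u w * (p (m - s) w z' * P z' y) * \<phi> w y)" by (rule sum.swap)
        also have "\<dots> = (\<Sum>y<n. p s u w * p (Suc (m - s)) w y * \<phi> w y)"
          by (simp add: sum_distrib_left sum_distrib_right mult.assoc)
        also have "Suc (m - s) = t - s" using t sm by simp
        finally show "(\<Sum>z'<n. p s u w * p (m - s) w z' * (\<Sum>y<n. P z' y * \<phi> w y))
            = (\<Sum>y<n. p s u w * p (t - s) w y * \<phi> w y)" .
      qed
      finally show ?thesis .
    qed
  qed
qed

end


lemma integral_if_point: "(\<integral>m. (if m = xs then c else 0) \<partial>measure_pmf M) = pmf M xs * (c::real)"
proof -
  have "(\<lambda>m. if m = xs then c else 0) = (\<lambda>m. indicator {xs} m * c)" by (auto simp: indicator_def)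
  then show ?thesis by (simp add: measure_pmf_single)
qed

definition cnt :: "nat \<Rightarrow> nat \<Rightarrow> nat list \<Rightarrow> nat" where
  "cnt v k xs = card {i. i < k \<and> xs ! i = v}"

lemma cnt_snoc:
  assumes "length xs = Suc k"
  shows "cnt v (Suc k) (xs @ [y]) = cnt v k xs + (if xs ! k = v then 1 else 0)"
proof -
  have "{i. i < Suc k \<and> (xs @ [y]) ! i = v} = {i. i < k \<and> xs ! i = v} \<union> (if xs ! k = v then {k} else {})"
    using assms by (auto simp: nth_append less_Suc_eq)
  then show ?thesis by (auto simp: cnt_def)
qed

lemma nbr_set:
  assumes "x < n" "v < n"
  shows "{y. adjG n E v x y} = {y. y < n \<and> E x y} \<union> (if x = v then {n} else {})"
  using assms by (auto simp: adjG_def)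

lemma walk_step_prob:
  assumes reg: "regular_graph n d E" and d: "d > 0" and v: "v < n" and x: "x < n" and y: "y < n"
  shows "pmf (pmf_of_set {y. adjG n E v x y}) y = Pr d E x y * (if x = v then real d / (d + 1) else 1)"
proof -
  have cE: "card {y. y < n \<and> E x y} = d" using reg x by (auto simp: regular_graph_def)
  have fE: "finite {y. y < n \<and> E x y}" by simp
  have cardN: "card {y. adjG n E v x y} = d + (if x = v then 1 else 0)"
    unfolding nbr_set[OF x v] using cE fE by (auto simp: card_insert_if)
  have fin: "finite {y. adjG n E v x y}" unfolding nbr_set[OF x v] by simp
  have ne: "{y. adjG n E v x y} \<noteq> {}"
    using cardN d by (metis card.empty add_is_0 not_gr0)
  have adj: "adjG n E v x y \<longleftrightarrow> E x y" using x y by (auto simp: adjG_def)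
  have p: "pmf (pmf_of_set {y. adjG n E v x y}) y = (if E x y then 1 / real (card {y. adjG n E v x y}) else 0)"
    using fin ne adj by (simp add: indicator_def)
  have d1: "real d + 1 > 0" "real d > 0" using d by auto
  show ?thesis
  proof (cases "x = v")
    case True
    then show ?thesis using p cardN d1 by (simp add: Pr_def)
  next
    case False
    then show ?thesis using p cardN d1 by (simp add: Pr_def)
  qed
qed

lemma walk_pmf:
  assumes reg: "regular_graph n d E" and d: "d > 0" and v: "v < n"
  shows "xs \<in> paths n k \<Longrightarrow> pmf (walk (adjG n E v) u k) xs = pn (Pr d E) u xs * (real d / (d + 1)) ^ cnt v k xs"
proof (induction k arbitrary: xs)
  case 0
  then obtain x where x: "xs = [x]" unfolding paths_0 by auto
  show ?case by (auto simp: x pn_def cnt_def indicator_def)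
next
  case (Suc k)
  then obtain ys y where zs: "xs = ys @ [y]" and ys: "ys \<in> paths n k" and y: "y < n"
    unfolding paths_Suc by auto
  have l: "length ys = Suc k" using ys by (simp add: paths_def)
  have lst: "last ys = ys ! k" by (metis l last_conv_nth length_0_conv nat.distinct(1) diff_Suc_1)
  have yk: "ys ! k < n" using paths_nth[OF ys, of k] by simp
  let ?S = "\<lambda>m. pmf_of_set {y. adjG n E v (last m) y}"
  have "pmf (walk (adjG n E v) u (Suc k)) xs = (\<integral>m. pmf (map_pmf (\<lambda>y. m @ [y]) (?S m)) xs \<partial>measure_pmf (walk (adjG n E v) u k))"
    by (simp add: pmf_bind)
  also have "\<dots> = (\<integral>m. (if m = ys then pmf (?S ys) y else 0) \<partial>measure_pmf (walk (adjG n E v) u k))"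
  proof (intro Bochner_Integration.integral_cong refl)
    fix m
    have pre: "(\<lambda>y'. m @ [y']) -` {xs} = (if m = ys then {y} else {})" by (auto simp: zs)
    show "pmf (map_pmf (\<lambda>y. m @ [y]) (?S m)) xs = (if m = ys then pmf (?S ys) y else 0)"
      by (simp add: pmf_map pre measure_pmf_single)
  qed
  also have "\<dots> = pmf (walk (adjG n E v) u k) ys * pmf (?S ys) y" by (rule integral_if_point)
  also have "pmf (?S ys) y = Pr d E (ys ! k) y * (if ys ! k = v then real d / (d + 1) else 1)"
    unfolding lst by (rule walk_step_prob[OF reg d v yk y])
  also have "pmf (walk (adjG n E v) u k) ys = pn (Pr d E) u ys * (real d / (d + 1)) ^ cnt v k ys"
    by (rule Suc.IH[OF ys])
  finally show ?case
    by (simp add: zs pn_snoc[OF ys] cnt_snoc[OF l] power_add)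
qed

lemma meet_lower:
  assumes reg: "regular_graph n d E" and d: "d > 0" and v: "v < n"
  defines "a \<equiv> real d / (d + 1)"
  shows "meet_prob n E v u1 u2 \<ge> (\<Sum>xs\<in>paths n n. \<Sum>ys\<in>paths n n.
     (pn (Pr d E) u1 xs * a ^ cnt v n xs) * (pn (Pr d E) u2 ys * a ^ cnt v n ys) *
     (if \<exists>t\<in>{T..n}. xs ! t = ys ! t then 1 else 0))"
proof -
  let ?M = "pair_pmf (walk (adjG n E v) u1 n) (walk (adjG n E v) u2 n)"
  define G where "G = {p \<in> paths n n \<times> paths n n. \<exists>t\<in>{T..n}. fst p ! t = snd p ! t}"
  have finG: "finite G" unfolding G_def using finite_paths by simp
  have sub: "G \<subseteq> meet_event n n"
  proof
    fix p assume p: "p \<in> G"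
    obtain xs ys where pe: "p = (xs, ys)" by (cases p)
    from p obtain t where t: "t \<in> {T..n}" "xs ! t = ys ! t" and xs: "xs \<in> paths n n" and ys: "ys \<in> paths n n"
      unfolding G_def pe by auto
    have "\<forall>s. 1 \<le> s \<and> s < t \<longrightarrow> xs ! s \<noteq> n" using paths_nth[OF xs] t by (metis atLeastAtMost_iff less_imp_le_nat order.strict_trans2 nat_less_le)
    moreover have "\<forall>s. 1 \<le> s \<and> s < t \<longrightarrow> ys ! s \<noteq> n" using paths_nth[OF ys] t by (metis atLeastAtMost_iff less_imp_le_nat order.strict_trans2 nat_less_le)
    ultimately show "p \<in> meet_event n n" unfolding pe meet_event_def using t by auto
  qed
  have "measure ?M G \<le> measure ?M (meet_event n n)"
    by (rule measure_pmf.finite_measure_mono[OF sub]) simp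
  moreover have "measure ?M G = (\<Sum>p\<in>G. pmf ?M p)" by (rule measure_measure_pmf_finite[OF finG])
  moreover have "(\<Sum>p\<in>G. pmf ?M p) = (\<Sum>p\<in>paths n n \<times> paths n n. if \<exists>t\<in>{T..n}. fst p ! t = snd p ! t then pmf ?M p else 0)"
    unfolding G_def by (rule sum.inter_filter) (simp add: finite_paths)
  moreover have "\<dots> = (\<Sum>xs\<in>paths n n. \<Sum>ys\<in>paths n n. if \<exists>t\<in>{T..n}. xs ! t = ys ! t then pmf ?M (xs, ys) else 0)"
    by (subst sum.cartesian_product) (rule sum.cong, auto simp: case_prod_beta)
  moreover have "\<dots> = (\<Sum>xs\<in>paths n n. \<Sum>ys\<in>paths n n.
     (pn (Pr d E) u1 xs * a ^ cnt v n xs) * (pn (Pr d E) u2 ys * a ^ cnt v n ys) *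
     (if \<exists>t\<in>{T..n}. xs ! t = ys ! t then 1 else 0))"
    by (intro sum.cong refl) (simp add: pmf_pair walk_pmf[OF reg d v] a_def)
  ultimately show ?thesis unfolding meet_prob_def by linarith
qed


lemma wCS:
  fixes \<mu> W Z :: "'a \<Rightarrow> real"
  assumes "\<And>x. x \<in> A \<Longrightarrow> 0 \<le> \<mu> x" "\<And>x. x \<in> A \<Longrightarrow> 0 \<le> W x" "\<And>x. x \<in> A \<Longrightarrow> 0 \<le> Z x"
  shows "(\<Sum>x\<in>A. \<mu> x * W x * Z x)\<^sup>2 \<le> (\<Sum>x\<in>A. \<mu> x * W x * (if Z x > 0 then 1 else 0)) * (\<Sum>x\<in>A. \<mu> x * W x * (Z x)\<^sup>2)"
proof -
  define f where "f x = sqrt (\<mu> x * W x * (if Z x > 0 then 1 else 0))" for x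
  define g where "g x = sqrt (\<mu> x * W x) * Z x" for x
  have "(\<Sum>x\<in>A. \<mu> x * W x * Z x) = (\<Sum>x\<in>A. f x * g x)"
  proof (rule sum.cong[OF refl])
    fix x assume x: "x \<in> A"
    have mw: "0 \<le> \<mu> x * W x" using assms x by simp
    show "\<mu> x * W x * Z x = f x * g x"
    proof (cases "Z x > 0")
      case True
      then show ?thesis using mw by (simp add: f_def g_def real_sqrt_mult[symmetric])
    next
      case False
      then have "Z x = 0" using assms x by force
      then show ?thesis by (simp add: f_def g_def)
    qed
  qed
  also have "(\<Sum>x\<in>A. f x * g x)\<^sup>2 \<le> (\<Sum>x\<in>A. (f x)\<^sup>2) * (\<Sum>x\<in>A. (g x)\<^sup>2)"
    by (rule Cauchy_Schwarz_ineq_sum)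
  also have "(\<Sum>x\<in>A. (f x)\<^sup>2) = (\<Sum>x\<in>A. \<mu> x * W x * (if Z x > 0 then 1 else 0))"
    using assms by (intro sum.cong refl) (simp add: f_def)
  also have "(\<Sum>x\<in>A. (g x)\<^sup>2) = (\<Sum>x\<in>A. \<mu> x * W x * (Z x)\<^sup>2)"
    using assms by (intro sum.cong refl) (simp add: g_def power_mult_distrib)
  finally show ?thesis .
qed

lemma wJensen:
  fixes \<mu> N Z :: "'a \<Rightarrow> real"
  assumes mu: "\<And>x. x \<in> A \<Longrightarrow> 0 \<le> \<mu> x" and Z: "\<And>x. x \<in> A \<Longrightarrow> 0 \<le> Z x"
    and al: "0 < \<alpha>" and S: "(\<Sum>x\<in>A. \<mu> x * Z x) > 0"
  shows "(\<Sum>x\<in>A. \<mu> x * Z x * \<alpha> powr N x) \<ge> (\<Sum>x\<in>A. \<mu> x * Z x) * \<alpha> powr ((\<Sum>x\<in>A. \<mu> x * Z x * N x) / (\<Sum>x\<in>A. \<mu> x * Z x))"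
proof -
  define c where "c = (\<Sum>x\<in>A. \<mu> x * Z x * N x) / (\<Sum>x\<in>A. \<mu> x * Z x)"
  have pt: "\<alpha> powr N x \<ge> \<alpha> powr c * (1 + (N x - c) * ln \<alpha>)" for x
  proof -
    have "\<alpha> powr N x = \<alpha> powr c * exp ((N x - c) * ln \<alpha>)"
      using al by (simp add: powr_def exp_add[symmetric] algebra_simps)
    moreover have "exp ((N x - c) * ln \<alpha>) \<ge> 1 + (N x - c) * ln \<alpha>" by (rule exp_ge_add_one_self)
    ultimately show ?thesis using al by simp
  qed
  have "(\<Sum>x\<in>A. \<mu> x * Z x * \<alpha> powr N x) \<ge> (\<Sum>x\<in>A. \<mu> x * Z x * (\<alpha> powr c * (1 + (N x - c) * ln \<alpha>)))"
    using mu Z pt by (intro sum_mono mult_left_mono) auto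
  moreover have "(\<Sum>x\<in>A. \<mu> x * Z x * (\<alpha> powr c * (1 + (N x - c) * ln \<alpha>)))
      = \<alpha> powr c * ((\<Sum>x\<in>A. \<mu> x * Z x) + ln \<alpha> * ((\<Sum>x\<in>A. \<mu> x * Z x * N x) - c * (\<Sum>x\<in>A. \<mu> x * Z x)))"
    by (simp add: algebra_simps sum.distrib sum_subtractf sum_distrib_left sum_distrib_right)
  moreover have "(\<Sum>x\<in>A. \<mu> x * Z x * N x) - c * (\<Sum>x\<in>A. \<mu> x * Z x) = 0"
    using S by (simp add: c_def)
  ultimately show ?thesis by (simp add: c_def mult.commute)
qed

lemma geo_inj:
  fixes \<rho> :: real
  assumes r0: "0 \<le> \<rho>" and r1: "\<rho> < 1" and inj: "inj_on h B" and fin: "finite B"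
  shows "(\<Sum>t\<in>B. \<rho> ^ h t) \<le> 1 / (1 - \<rho>)"
proof -
  have "(\<Sum>t\<in>B. \<rho> ^ h t) = (\<Sum>k\<in>h ` B. \<rho> ^ k)" by (simp add: sum.reindex[OF inj])
  also have "\<dots> \<le> (\<Sum>k<Suc (Max (h ` B)). \<rho> ^ k)"
  proof (cases "B = {}")
    case True then show ?thesis using r0 by (simp add: sum_nonneg)
  next
    case False
    have "h ` B \<subseteq> {..<Suc (Max (h ` B))}" using fin by (auto simp: le_imp_less_Suc)
    then show ?thesis using r0 by (intro sum_mono2) auto
  qed
  also have "\<dots> = (1 - \<rho> ^ Suc (Max (h ` B))) / (1 - \<rho>)"
    using r1 by (subst sum_gp_strict) simp
  also have "\<dots> \<le> 1 / (1 - \<rho>)" using r0 r1 by (simp add: divide_right_mono)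
  finally show ?thesis .
qed

definition dd :: "nat \<Rightarrow> nat \<Rightarrow> nat" where "dd s t = (if s \<le> t then t - s else s - t)"

lemma geo_dd:
  fixes \<rho> :: real
  assumes r0: "0 \<le> \<rho>" and r1: "\<rho> < 1" and fin: "finite A"
  shows "(\<Sum>t\<in>A. \<rho> ^ dd s t) \<le> 2 / (1 - \<rho>)"
proof -
  let ?A1 = "{t\<in>A. s \<le> t}" and ?A2 = "{t\<in>A. \<not> s \<le> t}"
  have "(\<Sum>t\<in>A. \<rho> ^ dd s t) = (\<Sum>t\<in>?A1. \<rho> ^ dd s t) + (\<Sum>t\<in>?A2. \<rho> ^ dd s t)"
  proof -
    have e: "A = ?A1 \<union> ?A2" by auto
    show ?thesis by (subst e, rule sum.union_disjoint) (use fin in auto)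
  qed
  also have "(\<Sum>t\<in>?A1. \<rho> ^ dd s t) = (\<Sum>t\<in>?A1. \<rho> ^ (t - s))" by (intro sum.cong) (auto simp: dd_def)
  also have "(\<Sum>t\<in>?A2. \<rho> ^ dd s t) = (\<Sum>t\<in>?A2. \<rho> ^ (s - t))" by (intro sum.cong) (auto simp: dd_def)
  also have "(\<Sum>t\<in>?A1. \<rho> ^ (t - s)) \<le> 1 / (1 - \<rho>)"
    using fin by (intro geo_inj[OF r0 r1]) (auto simp: inj_on_def)
  also have "(\<Sum>t\<in>?A2. \<rho> ^ (s - t)) \<le> 1 / (1 - \<rho>)"
    using fin by (intro geo_inj[OF r0 r1]) (auto simp: inj_on_def)
  finally show ?thesis by simp
qed


lemma pn_nonneg: "(\<And>x y. 0 \<le> P x y) \<Longrightarrow> 0 \<le> pn P u xs"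
  by (auto simp: pn_def intro!: prod_nonneg)

locale spec = stoch +
  fixes \<rho> :: real
  assumes r0: "0 \<le> \<rho>" and r1: "\<rho> < 1"
    and tr: "\<And>k. k \<ge> 1 \<Longrightarrow> (\<Sum>x<n. p k x x) - 1 \<le> real (n - 1) * \<rho> ^ k"
begin

lemma pu: "x < n \<Longrightarrow> y < n \<Longrightarrow> p k x y \<le> 1 / n + \<rho> ^ k"
  by (rule pw_upper[OF r0 tr])

lemma pc: "x < n \<Longrightarrow> y < n \<Longrightarrow> k \<ge> 1 \<Longrightarrow> \<bar>p k x y - 1 / n\<bar> \<le> \<rho> ^ k"
  by (rule pw_close[OF r0 tr])

lemma pnn: "0 \<le> pn P u xs" by (rule pn_nonneg[OF Pnn])

lemma delta_r: "c < n \<Longrightarrow> (\<Sum>z<n. f z * (if c = z then 1 else 0)) = (f c :: real)"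
proof -
  assume c: "c < n"
  have "(\<Sum>z<n. f z * (if c = z then 1 else 0)) = (\<Sum>z<n. if z = c then f c else 0)"
    by (rule sum.cong) auto
  then show ?thesis using c by simp
qed

definition Ex :: "nat \<Rightarrow> nat \<Rightarrow> (nat list \<Rightarrow> nat list \<Rightarrow> real) \<Rightarrow> real" where
  "Ex a b F = (\<Sum>xs\<in>paths n n. pn P a xs * (\<Sum>ys\<in>paths n n. pn P b ys * F xs ys))"

definition ft :: "nat \<Rightarrow> nat list \<Rightarrow> nat list \<Rightarrow> real" where
  "ft t xs ys = (if xs ! t = ys ! t then 1 else 0)"

lemma Ex_mono:
  assumes "\<And>xs ys. xs \<in> paths n n \<Longrightarrow> ys \<in> paths n n \<Longrightarrow> F xs ys \<le> G xs ys"
  shows "Ex a b F \<le> Ex a b G"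
  unfolding Ex_def using assms pnn
  by (intro sum_mono mult_left_mono) auto

lemma Ex_nonneg:
  assumes "\<And>xs ys. xs \<in> paths n n \<Longrightarrow> ys \<in> paths n n \<Longrightarrow> 0 \<le> F xs ys"
  shows "0 \<le> Ex a b F"
  unfolding Ex_def using assms pnn
  by (intro sum_nonneg mult_nonneg_nonneg) auto

lemma Ex_add: "Ex a b (\<lambda>xs ys. F xs ys + G xs ys) = Ex a b F + Ex a b G"
  unfolding Ex_def by (simp add: algebra_simps sum.distrib)

lemma Ex_cmult: "Ex a b (\<lambda>xs ys. c * F xs ys) = c * Ex a b F"
  unfolding Ex_def by (simp add: algebra_simps sum_distrib_left)

lemma Ex_sum: "Ex a b (\<lambda>xs ys. \<Sum>t\<in>A. F t xs ys) = (\<Sum>t\<in>A. Ex a b (F t))"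
proof -
  have i: "(\<Sum>ys\<in>paths n n. pn P b ys * (\<Sum>t\<in>A. F t xs ys)) = (\<Sum>t\<in>A. \<Sum>ys\<in>paths n n. pn P b ys * F t xs ys)" for xs
  proof -
    have "(\<Sum>ys\<in>paths n n. pn P b ys * (\<Sum>t\<in>A. F t xs ys)) = (\<Sum>ys\<in>paths n n. \<Sum>t\<in>A. pn P b ys * F t xs ys)"
      by (simp add: sum_distrib_left)
    also have "\<dots> = (\<Sum>t\<in>A. \<Sum>ys\<in>paths n n. pn P b ys * F t xs ys)" by (rule sum.swap)
    finally show ?thesis .
  qed
  have "Ex a b (\<lambda>xs ys. \<Sum>t\<in>A. F t xs ys) = (\<Sum>xs\<in>paths n n. \<Sum>t\<in>A. pn P a xs * (\<Sum>ys\<in>paths n n. pn P b ys * F t xs ys))"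
    unfolding Ex_def i by (simp add: sum_distrib_left)
  also have "\<dots> = (\<Sum>t\<in>A. \<Sum>xs\<in>paths n n. pn P a xs * (\<Sum>ys\<in>paths n n. pn P b ys * F t xs ys))" by (rule sum.swap)
  also have "\<dots> = (\<Sum>t\<in>A. Ex a b (F t))" unfolding Ex_def ..
  finally show ?thesis .
qed

lemma Ex_swap: "Ex a b F = Ex b a (\<lambda>ys xs. F xs ys)"
proof -
  have "Ex a b F = (\<Sum>xs\<in>paths n n. \<Sum>ys\<in>paths n n. pn P a xs * (pn P b ys * F xs ys))"
    unfolding Ex_def by (simp add: sum_distrib_left)
  also have "\<dots> = (\<Sum>ys\<in>paths n n. \<Sum>xs\<in>paths n n. pn P a xs * (pn P b ys * F xs ys))" by (rule sum.swap)
  also have "\<dots> = Ex b a (\<lambda>ys xs. F xs ys)"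
    unfolding Ex_def by (simp add: sum_distrib_left algebra_simps)
  finally show ?thesis .
qed

lemma inner_ft:
  assumes b: "b < n" and xs: "xs \<in> paths n n" and t: "t \<le> n"
  shows "(\<Sum>ys\<in>paths n n. pn P b ys * ft t xs ys) = p t b (xs ! t)"
proof -
  have "(\<Sum>ys\<in>paths n n. pn P b ys * ft t xs ys) = (\<Sum>ys\<in>paths n n. pn P b ys * (\<lambda>z. if xs ! t = z then 1 else 0) (ys ! t))"
    by (simp add: ft_def)
  also have "\<dots> = (\<Sum>z<n. p t b z * (if xs ! t = z then 1 else 0))" by (rule ST[OF b t])
  also have "\<dots> = p t b (xs ! t)" by (rule delta_r[OF paths_nth[OF xs t]])
  finally show ?thesis .
qed

lemma E1:
  assumes a: "a < n" and b: "b < n" and t: "t \<le> n"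
  shows "Ex a b (ft t) = (\<Sum>w<n. p t a w * p t b w)" and "Ex a b (ft t) = p (2 * t) a b"
proof -
  have "Ex a b (ft t) = (\<Sum>xs\<in>paths n n. pn P a xs * p t b (xs ! t))"
    unfolding Ex_def by (intro sum.cong refl) (simp add: inner_ft[OF b _ t])
  also have "\<dots> = (\<Sum>w<n. p t a w * p t b w)" by (rule ST[OF a t])
  finally show "Ex a b (ft t) = (\<Sum>w<n. p t a w * p t b w)" .
  also have "\<dots> = (\<Sum>w<n. p t a w * p t w b)" using b by (intro sum.cong refl) (metis lessThan_iff pw_sym)
  also have "\<dots> = p (t + t) a b" by (rule pw_add[OF a b, symmetric])
  finally show "Ex a b (ft t) = p (2 * t) a b" by (simp add: mult_2)
qed

end


context stoch begin

lemma dl: "c < n \<Longrightarrow> (\<Sum>z<n. f z * (if z = c then 1 else 0)) = (f c :: real)"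
proof -
  assume c: "c < n"
  have "(\<Sum>z<n. f z * (if z = c then 1 else 0)) = (\<Sum>z<n. if z = c then f c else 0)"
    by (rule sum.cong) auto
  then show ?thesis using c by simp
qed

lemma dl2: "c < n \<Longrightarrow> (\<Sum>w<n. \<Sum>z<n. G w z * (if w = c then 1 else 0)) = (\<Sum>z<n. G c z :: real)"
proof -
  assume c: "c < n"
  have "(\<Sum>w<n. \<Sum>z<n. G w z * (if w = c then 1 else 0)) = (\<Sum>w<n. (\<Sum>z<n. G w z) * (if w = c then 1 else 0))"
    by (simp add: sum_distrib_right)
  also have "\<dots> = (\<Sum>z<n. G c z)" by (rule dl[OF c])
  finally show ?thesis .
qed

end

locale msetup = spec +
  fixes v T :: nat
  assumes v: "v < n" and T1: "1 \<le> T" and Tn: "T \<le> n" and rT: "\<rho> ^ T \<le> 1 / (2 * n)"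
    and n2: "2 \<le> n" and TI: "n \<le> 2 * (n + 1 - T)"
begin

definition ind :: "nat \<Rightarrow> nat list \<Rightarrow> real" where
  "ind i xs = (if xs ! i = v then 1 else 0)"

lemma npos': "real n > 0" using n2 by simp

lemma rho_le: "T \<le> k \<Longrightarrow> \<rho> ^ k \<le> 1 / (2 * n)"
  using power_decreasing[of T k \<rho>] r0 r1 rT by simp

lemma pbig: "T \<le> k \<Longrightarrow> x < n \<Longrightarrow> y < n \<Longrightarrow> p k x y \<le> 2 / n"
proof -
  assume k: "T \<le> k" and xy: "x < n" "y < n"
  have "p k x y \<le> 1 / n + \<rho> ^ k" by (rule pu[OF xy])
  also have "\<dots> \<le> 1 / n + 1 / (2 * n)" using rho_le[OF k] by simp
  also have "\<dots> \<le> 2 / n" using npos' by (simp add: field_simps)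
  finally show ?thesis .
qed

lemma E2:
  assumes a: "a < n" and b: "b < n" and t: "T \<le> t" "t \<le> n"
  shows "1 / (2 * n) \<le> Ex a b (ft t)" and "Ex a b (ft t) \<le> 2 / n"
proof -
  have e: "Ex a b (ft t) = p (2 * t) a b" by (rule E1(2)[OF a b t(2)])
  have "\<bar>p (2 * t) a b - 1 / n\<bar> \<le> \<rho> ^ (2 * t)" using T1 t by (intro pc[OF a b]) auto
  moreover have "\<rho> ^ (2 * t) \<le> 1 / (2 * n)" using t by (intro rho_le) auto
  ultimately have "\<bar>p (2 * t) a b - 1 / n\<bar> \<le> 1 / (2 * n)" by simp
  then have h1: "1 / n - 1 / (2 * n) \<le> p (2 * t) a b" and h2: "p (2 * t) a b \<le> 1 / n + 1 / (2 * n)"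
    by (auto simp: abs_le_iff)
  have "1 / n - 1 / (2 * n) = 1 / (2 * real n)" using npos' by (simp add: field_simps)
  then show "1 / (2 * n) \<le> Ex a b (ft t)" using h1 e by simp
  have "1 / n + 1 / (2 * n) \<le> 2 / real n" using npos' by (simp add: field_simps)
  then show "Ex a b (ft t) \<le> 2 / n" using h2 e by simp
qed

lemma E3:
  assumes a: "a < n" and b: "b < n" and st: "T \<le> s" "s \<le> t" "t \<le> n"
  shows "Ex a b (\<lambda>xs ys. ft s xs ys * ft t xs ys) \<le> (2 / n) * (1 / n + \<rho> ^ (t - s))"
proof -
  let ?c = "1 / real n + \<rho> ^ (t - s)"
  have inner: "(\<Sum>ys\<in>paths n n. pn P b ys * (ft s xs ys * ft t xs ys)) = p s b (xs ! s) * p (t - s) (xs ! s) (xs ! t)"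
    if xs: "xs \<in> paths n n" for xs
  proof -
    have xs1: "xs ! s < n" "xs ! t < n" using paths_nth[OF xs] st by auto
    have "(\<Sum>ys\<in>paths n n. pn P b ys * (ft s xs ys * ft t xs ys))
        = (\<Sum>ys\<in>paths n n. pn P b ys * (\<lambda>w z. (if w = xs ! s then 1 else 0) * (if z = xs ! t then 1 else 0)) (ys ! s) (ys ! t))"
      by (intro sum.cong refl) (auto simp: ft_def)
    also have "\<dots> = (\<Sum>w<n. \<Sum>z<n. p s b w * p (t - s) w z * ((if w = xs ! s then 1 else 0) * (if z = xs ! t then 1 else 0)))"
      by (rule TT[OF b st(2) st(3)])
    also have "\<dots> = (\<Sum>w<n. \<Sum>z<n. (p s b w * p (t - s) w z * (if z = xs ! t then 1 else 0)) * (if w = xs ! s then 1 else 0))"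
      by (simp add: algebra_simps)
    also have "\<dots> = (\<Sum>z<n. p s b (xs ! s) * p (t - s) (xs ! s) z * (if z = xs ! t then 1 else 0))"
      by (rule dl2[OF xs1(1)])
    also have "\<dots> = p s b (xs ! s) * p (t - s) (xs ! s) (xs ! t)"
      by (rule dl[OF xs1(2)])
    finally show ?thesis .
  qed
  have "Ex a b (\<lambda>xs ys. ft s xs ys * ft t xs ys) = (\<Sum>xs\<in>paths n n. pn P a xs * (\<lambda>w z. p s b w * p (t - s) w z) (xs ! s) (xs ! t))"
    unfolding Ex_def by (intro sum.cong refl) (simp add: inner)
  also have "\<dots> = (\<Sum>w<n. \<Sum>z<n. p s a w * p (t - s) w z * (p s b w * p (t - s) w z))"
    by (rule TT[OF a st(2) st(3)])
  also have "\<dots> \<le> (\<Sum>w<n. \<Sum>z<n. (p s a w * p s b w * ?c) * p (t - s) w z)"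
  proof (intro sum_mono)
    fix w z assume w: "w \<in> {..<n}" and z: "z \<in> {..<n}"
    have "p (t - s) w z \<le> ?c" using w z by (intro pu) auto
    then have "(p s a w * p s b w * p (t - s) w z) * p (t - s) w z \<le> (p s a w * p s b w * ?c) * p (t - s) w z"
      by (intro mult_right_mono mult_left_mono mult_nonneg_nonneg pw_nonneg)
    then show "p s a w * p (t - s) w z * (p s b w * p (t - s) w z) \<le> (p s a w * p s b w * ?c) * p (t - s) w z"
      by (simp add: algebra_simps)
  qed
  also have "\<dots> = (\<Sum>w<n. (p s a w * p s b w * ?c) * (\<Sum>z<n. p (t - s) w z))"
    by (simp add: sum_distrib_left)
  also have "\<dots> = (\<Sum>w<n. p s a w * p s b w) * ?c"
    by (simp add: pw_row sum_distrib_right)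
  also have "(\<Sum>w<n. p s a w * p s b w) = Ex a b (ft s)" using E1(1)[OF a b] st by simp
  also have "Ex a b (ft s) * ?c \<le> (2 / n) * ?c"
    using E2(2)[OF a b st(1)] st r0 by (intro mult_right_mono) auto
  finally show ?thesis .
qed

lemma inner_ind:
  assumes b: "b < n" and xs: "xs \<in> paths n n" and t: "t \<le> n"
  shows "(\<Sum>ys\<in>paths n n. pn P b ys * (ind i xs * ft t xs ys)) = ind i xs * p t b (xs ! t)"
proof -
  have "(\<Sum>ys\<in>paths n n. pn P b ys * (ind i xs * ft t xs ys)) = ind i xs * (\<Sum>ys\<in>paths n n. pn P b ys * ft t xs ys)"
    by (simp add: sum_distrib_left algebra_simps)
  then show ?thesis by (simp add: inner_ft[OF b xs t])
qed

lemma E4: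
  assumes a: "a < n" and b: "b < n" and it: "i \<le> t" and t: "T \<le> t" "t \<le> n"
  shows "Ex a b (\<lambda>xs ys. ind i xs * ft t xs ys) \<le> (2 / n) * p i a v"
proof -
  have "Ex a b (\<lambda>xs ys. ind i xs * ft t xs ys) = (\<Sum>xs\<in>paths n n. pn P a xs * (\<lambda>w z. (if w = v then 1 else 0) * p t b z) (xs ! i) (xs ! t))"
    unfolding Ex_def by (intro sum.cong refl) (subst inner_ind[OF b _ t(2)], assumption, simp add: ind_def)
  also have "\<dots> = (\<Sum>w<n. \<Sum>z<n. p i a w * p (t - i) w z * ((if w = v then 1 else 0) * p t b z))"
    by (rule TT[OF a it t(2)])
  also have "\<dots> = (\<Sum>w<n. \<Sum>z<n. (p i a w * p (t - i) w z * p t b z) * (if w = v then 1 else 0))"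
    by (simp add: algebra_simps)
  also have "\<dots> = (\<Sum>z<n. p i a v * p (t - i) v z * p t b z)" by (rule dl2[OF v])
  also have "\<dots> \<le> (\<Sum>z<n. p i a v * p (t - i) v z * (2 / n))"
    using t b by (intro sum_mono mult_left_mono pbig mult_nonneg_nonneg pw_nonneg) auto
  also have "\<dots> = p i a v * (2 / n) * (\<Sum>z<n. p (t - i) v z)"
    by (simp add: sum_distrib_left sum_divide_distrib mult.commute mult.left_commute)
  also have "\<dots> = (2 / n) * p i a v" using pw_row[OF v] by simp
  finally show ?thesis .
qed

lemma E5:
  assumes a: "a < n" and b: "b < n" and it: "t < i" "i \<le> n" and t: "T \<le> t"
  shows "Ex a b (\<lambda>xs ys. ind i xs * ft t xs ys) \<le> Ex a b (ft t) * (1 / n + \<rho> ^ (i - t))"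
proof -
  have tn: "t \<le> n" using it by simp
  have "Ex a b (\<lambda>xs ys. ind i xs * ft t xs ys) = (\<Sum>xs\<in>paths n n. pn P a xs * (\<lambda>w z. p t b w * (if z = v then 1 else 0)) (xs ! t) (xs ! i))"
    unfolding Ex_def by (intro sum.cong refl) (subst inner_ind[OF b _ tn], assumption, simp add: ind_def)
  also have "\<dots> = (\<Sum>w<n. \<Sum>z<n. p t a w * p (i - t) w z * (p t b w * (if z = v then 1 else 0)))"
    using it by (intro TT[OF a]) auto
  also have "\<dots> = (\<Sum>w<n. \<Sum>z<n. (p t a w * p t b w * p (i - t) w z) * (if z = v then 1 else 0))"
    by (simp add: algebra_simps)
  also have "\<dots> = (\<Sum>w<n. p t a w * p t b w * p (i - t) w v)"
    by (intro sum.cong refl) (rule dl[OF v])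
  also have "\<dots> \<le> (\<Sum>w<n. p t a w * p t b w * (1 / n + \<rho> ^ (i - t)))"
    using v by (intro sum_mono mult_left_mono pu mult_nonneg_nonneg pw_nonneg) auto
  also have "\<dots> = (\<Sum>w<n. p t a w * p t b w) * (1 / n + \<rho> ^ (i - t))"
    by (simp add: sum_distrib_right)
  also have "(\<Sum>w<n. p t a w * p t b w) = Ex a b (ft t)" using E1(1)[OF a b tn] by simp
  finally show ?thesis .
qed

lemma E45:
  assumes a: "a < n" and b: "b < n" and i: "i \<le> n" and t: "T \<le> t" "t \<le> n"
  shows "Ex a b (\<lambda>xs ys. ind i xs * ft t xs ys) \<le> (2 / n) * p i a v + Ex a b (ft t) * (1 / n + \<rho> ^ dd t i)"
proof -
  have n1: "0 \<le> (2 / n) * p i a v" using npos' by (simp add: pw_nonneg)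
  have n2': "0 \<le> Ex a b (ft t) * (1 / n + \<rho> ^ dd t i)"
    using r0 by (intro mult_nonneg_nonneg Ex_nonneg) (auto simp: ft_def)
  show ?thesis
  proof (cases "i \<le> t")
    case True
    then show ?thesis using E4[OF a b True t] n2' by simp
  next
    case False
    then have "dd t i = i - t" by (simp add: dd_def)
    then show ?thesis using E5[OF a b _ i t(1)] False n1 by simp
  qed
qed

definition Zf :: "nat list \<Rightarrow> nat list \<Rightarrow> real" where
  "Zf xs ys = (\<Sum>t\<in>{T..n}. ft t xs ys)"

definition Nr :: "nat list \<Rightarrow> real" where
  "Nr xs = (\<Sum>i<n. ind i xs)"

abbreviation "K \<equiv> 1 / (1 - \<rho>)"

lemma K_nonneg: "0 \<le> K" using r1 by simp

lemma cardI: "card {T..n} = n + 1 - T" by simp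

lemma cardI_bounds: "real (card {T..n}) * (2 / n) \<le> 3" "real (card {T..n}) / n \<le> 2"
  "real (card {T..n}) * (1 / (2 * n)) \<ge> 1 / 4"
proof -
  have c: "real (card {T..n}) \<le> n + 1" using cardI by simp
  show "real (card {T..n}) * (2 / n) \<le> 3"
  proof -
    have "real (card {T..n}) * (2 / n) \<le> (n + 1) * (2 / n)" using c npos' by (intro mult_right_mono) auto
    also have "\<dots> \<le> 3" using n2 npos' by (simp add: field_simps)
    finally show ?thesis .
  qed
  show "real (card {T..n}) / n \<le> 2"
  proof -
    have "real (card {T..n}) / n \<le> (n + 1) / n" using c npos' by (intro divide_right_mono) auto
    also have "\<dots> \<le> 2" using n2 npos' by (simp add: field_simps)
    finally show ?thesis .
  qed
  show "real (card {T..n}) * (1 / (2 * n)) \<ge> 1 / 4"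
  proof -
    have "real n \<le> 2 * real (card {T..n})" using TI cardI by (metis of_nat_le_iff of_nat_mult of_nat_numeral)
    then show ?thesis using npos' by (simp add: field_simps)
  qed
qed

lemma ft_nonneg: "0 \<le> ft t xs ys" by (simp add: ft_def)

lemma S1:
  assumes a: "a < n" and b: "b < n"
  shows "1 / 4 \<le> Ex a b Zf" and "Ex a b Zf \<le> 3"
proof -
  have e: "Ex a b Zf = (\<Sum>t\<in>{T..n}. Ex a b (ft t))" unfolding Zf_def by (rule Ex_sum)
  have "(\<Sum>t\<in>{T..n}. Ex a b (ft t)) \<ge> (\<Sum>t\<in>{T..n}. 1 / (2 * n))"
    using E2(1)[OF a b] by (intro sum_mono) auto
  moreover have "(\<Sum>t\<in>{T..n}. 1 / real (2 * n)) = real (card {T..n}) * (1 / real (2 * n))"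
    by (simp only: sum_constant)
  ultimately show "1 / 4 \<le> Ex a b Zf" using cardI_bounds(3) e by linarith
  have "(\<Sum>t\<in>{T..n}. Ex a b (ft t)) \<le> (\<Sum>t\<in>{T..n}. 2 / n)"
    using E2(2)[OF a b] by (intro sum_mono) auto
  moreover have "(\<Sum>t\<in>{T..n}. 2 / real n) = real (card {T..n}) * (2 / n)"
    by (simp only: sum_constant)
  ultimately show "Ex a b Zf \<le> 3" using cardI_bounds(1) e by linarith
qed

lemma E3':
  assumes a: "a < n" and b: "b < n" and st: "s \<in> {T..n}" "t \<in> {T..n}"
  shows "Ex a b (\<lambda>xs ys. ft s xs ys * ft t xs ys) \<le> (2 / n) * (1 / n + \<rho> ^ dd s t)"
proof (cases "s \<le> t")
  case True
  then show ?thesis using E3[OF a b] st by (simp add: dd_def)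
next
  case False
  have "Ex a b (\<lambda>xs ys. ft s xs ys * ft t xs ys) = Ex a b (\<lambda>xs ys. ft t xs ys * ft s xs ys)"
    by (simp add: mult.commute)
  also have "\<dots> \<le> (2 / n) * (1 / n + \<rho> ^ (s - t))" using E3[OF a b] st False by simp
  finally show ?thesis using False by (simp add: dd_def)
qed

lemma S2:
  assumes a: "a < n" and b: "b < n"
  shows "Ex a b (\<lambda>xs ys. (Zf xs ys)\<^sup>2) \<le> 6 + 6 * K"
proof -
  have sq: "(Zf xs ys)\<^sup>2 = (\<Sum>s\<in>{T..n}. \<Sum>t\<in>{T..n}. ft s xs ys * ft t xs ys)" for xs ys
    unfolding Zf_def power2_eq_square by (rule sum_product)
  have "Ex a b (\<lambda>xs ys. (Zf xs ys)\<^sup>2) = (\<Sum>s\<in>{T..n}. \<Sum>t\<in>{T..n}. Ex a b (\<lambda>xs ys. ft s xs ys * ft t xs ys))"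
    unfolding sq by (simp add: Ex_sum)
  also have "\<dots> \<le> (\<Sum>s\<in>{T..n}. \<Sum>t\<in>{T..n}. (2 / n) * (1 / n + \<rho> ^ dd s t))"
    using E3'[OF a b] by (intro sum_mono) auto
  also have "\<dots> = (\<Sum>s\<in>{T..n}. (2 / n) * (card {T..n} / n + (\<Sum>t\<in>{T..n}. \<rho> ^ dd s t)))"
  proof (rule sum.cong[OF refl])
    fix s
    have "(\<Sum>t\<in>{T..n}. (2 / real n) * (1 / n + \<rho> ^ dd s t)) = (2 / n) * (\<Sum>t\<in>{T..n}. 1 / n + \<rho> ^ dd s t)"
      by (rule sum_distrib_left[symmetric])
    also have "(\<Sum>t\<in>{T..n}. 1 / real n + \<rho> ^ dd s t) = (\<Sum>t\<in>{T..n}. 1 / real n) + (\<Sum>t\<in>{T..n}. \<rho> ^ dd s t)"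
      by (rule sum.distrib)
    also have "(\<Sum>t\<in>{T..n}. 1 / real n) = card {T..n} / n" by (simp only: sum_constant) simp
    finally show "(\<Sum>t\<in>{T..n}. (2 / real n) * (1 / n + \<rho> ^ dd s t)) = (2 / n) * (card {T..n} / n + (\<Sum>t\<in>{T..n}. \<rho> ^ dd s t))" .
  qed
  also have "\<dots> \<le> (\<Sum>s\<in>{T..n}. (2 / n) * (2 + 2 * K))"
  proof (intro sum_mono mult_left_mono)
    fix s
    have "(\<Sum>t\<in>{T..n}. \<rho> ^ dd s t) \<le> 2 / (1 - \<rho>)" by (rule geo_dd[OF r0 r1]) simp
    then show "card {T..n} / n + (\<Sum>t\<in>{T..n}. \<rho> ^ dd s t) \<le> 2 + 2 * K"
      using cardI_bounds(2) by simp
  qed (use npos' in simp)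
  also have "\<dots> = real (card {T..n}) * (2 / n) * (2 + 2 * K)" by simp
  also have "\<dots> \<le> 3 * (2 + 2 * K)"
    using cardI_bounds(1) K_nonneg by (intro mult_right_mono) auto
  finally show ?thesis by simp
qed

lemma sum_p_v: "a < n \<Longrightarrow> (\<Sum>i<n. p i a v) \<le> 1 + K"
proof -
  assume a: "a < n"
  have "(\<Sum>i<n. p i a v) \<le> (\<Sum>i<n. 1 / n + \<rho> ^ i)" using a v by (intro sum_mono pu) auto
  also have "\<dots> = 1 + (\<Sum>i<n. \<rho> ^ i)" using npos' by (simp add: sum.distrib)
  also have "(\<Sum>i<n. \<rho> ^ i) \<le> K" using geo_inj[OF r0 r1, of id "{..<n}"] by simp
  finally show ?thesis by simp
qed

lemma sum_dd: "(\<Sum>i<n. 1 / n + \<rho> ^ dd t i) \<le> 1 + 2 * K"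
proof -
  have "(\<Sum>i<n. 1 / n + \<rho> ^ dd t i) = 1 + (\<Sum>i<n. \<rho> ^ dd t i)" using npos' by (simp add: sum.distrib)
  also have "(\<Sum>i<n. \<rho> ^ dd t i) \<le> 2 / (1 - \<rho>)" by (rule geo_dd[OF r0 r1]) simp
  finally show ?thesis by simp
qed

lemma S3:
  assumes a: "a < n" and b: "b < n"
  shows "Ex a b (\<lambda>xs ys. Nr xs * Zf xs ys) \<le> 6 + 9 * K"
proof -
  have pr: "Nr xs * Zf xs ys = (\<Sum>i<n. \<Sum>t\<in>{T..n}. ind i xs * ft t xs ys)" for xs ys
    unfolding Nr_def Zf_def by (rule sum_product)
  have "Ex a b (\<lambda>xs ys. Nr xs * Zf xs ys) = (\<Sum>i<n. \<Sum>t\<in>{T..n}. Ex a b (\<lambda>xs ys. ind i xs * ft t xs ys))"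
    unfolding pr by (simp add: Ex_sum)
  also have "\<dots> \<le> (\<Sum>i<n. \<Sum>t\<in>{T..n}. (2 / n) * p i a v + Ex a b (ft t) * (1 / n + \<rho> ^ dd t i))"
    using E45[OF a b] by (intro sum_mono) auto
  also have "\<dots> = (\<Sum>i<n. \<Sum>t\<in>{T..n}. (2 / n) * p i a v) + (\<Sum>i<n. \<Sum>t\<in>{T..n}. Ex a b (ft t) * (1 / n + \<rho> ^ dd t i))"
    by (simp add: sum.distrib)
  also have "(\<Sum>i<n. \<Sum>t\<in>{T..n}. Ex a b (ft t) * (1 / n + \<rho> ^ dd t i)) = (\<Sum>t\<in>{T..n}. \<Sum>i<n. Ex a b (ft t) * (1 / n + \<rho> ^ dd t i))"
    by (rule sum.swap)
  also have "\<dots> = (\<Sum>t\<in>{T..n}. Ex a b (ft t) * (\<Sum>i<n. 1 / n + \<rho> ^ dd t i))"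
    by (simp only: sum_distrib_left)
  also have "\<dots> \<le> (\<Sum>t\<in>{T..n}. Ex a b (ft t) * (1 + 2 * K))"
    using sum_dd by (intro sum_mono mult_left_mono Ex_nonneg) (auto simp: ft_def)
  also have "\<dots> = Ex a b Zf * (1 + 2 * K)" unfolding Zf_def Ex_sum by (simp add: sum_distrib_right)
  also have "Ex a b Zf * (1 + 2 * K) \<le> 3 * (1 + 2 * K)"
    using S1(2)[OF a b] K_nonneg by (intro mult_right_mono) auto
  also have "(\<Sum>i<n. \<Sum>t\<in>{T..n}. (2 / n) * p i a v) = real (card {T..n}) * (2 / n) * (\<Sum>i<n. p i a v)"
    by (simp only: sum_constant sum_distrib_left[symmetric] mult.assoc)
  also have "\<dots> \<le> 3 * (1 + K)"
    using cardI_bounds(1) sum_p_v[OF a] K_nonneg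
    by (intro mult_mono) (auto intro!: sum_nonneg pw_nonneg)
  finally show ?thesis by simp
qed

lemma Ex_prod: "Ex a b F = (\<Sum>q\<in>paths n n \<times> paths n n. (pn P a (fst q) * pn P b (snd q)) * F (fst q) (snd q))"
proof -
  have "Ex a b F = (\<Sum>xs\<in>paths n n. \<Sum>ys\<in>paths n n. (pn P a xs * pn P b ys) * F xs ys)"
    unfolding Ex_def by (simp add: sum_distrib_left mult.assoc)
  also have "\<dots> = (\<Sum>q\<in>paths n n \<times> paths n n. (pn P a (fst q) * pn P b (snd q)) * F (fst q) (snd q))"
    by (subst sum.cartesian_product) (rule sum.cong, auto simp: case_prod_beta)
  finally show ?thesis .
qed

lemma cnt_Nr: "real (cnt v n xs) = Nr xs"
proof -
  have e: "{i. i < n \<and> xs ! i = v} = {i\<in>{..<n}. xs ! i = v}" by auto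
  have "real (cnt v n xs) = (\<Sum>i\<in>{i\<in>{..<n}. xs ! i = v}. 1)"
    unfolding cnt_def e by (rule real_of_card)
  also have "\<dots> = (\<Sum>i<n. if xs ! i = v then 1 else 0)" by (rule sum.inter_filter) simp
  also have "\<dots> = Nr xs" unfolding Nr_def ind_def ..
  finally show ?thesis .
qed

lemma Zf_pos: "(\<exists>t\<in>{T..n}. xs ! t = ys ! t) \<longleftrightarrow> Zf xs ys > 0"
proof
  assume "\<exists>t\<in>{T..n}. xs ! t = ys ! t"
  then obtain t where t: "t \<in> {T..n}" "xs ! t = ys ! t" by blast
  have "ft t xs ys \<le> Zf xs ys" unfolding Zf_def using t by (intro member_le_sum) (auto simp: ft_def)
  then show "Zf xs ys > 0" using t by (simp add: ft_def)
next
  assume "Zf xs ys > 0"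
  then have "(\<Sum>t\<in>{T..n}. ft t xs ys) \<noteq> 0" by (simp add: Zf_def)
  then obtain t where "t \<in> {T..n}" "ft t xs ys \<noteq> 0" by (meson sum.neutral)
  then show "\<exists>t\<in>{T..n}. xs ! t = ys ! t" by (auto simp: ft_def split: if_splits)
qed

lemma Zf_nonneg: "0 \<le> Zf xs ys" unfolding Zf_def by (intro sum_nonneg) (simp add: ft_def)
lemma Nr_nonneg: "0 \<le> Nr xs" unfolding Nr_def by (intro sum_nonneg) (simp add: ind_def)
lemma Zf_sym: "Zf xs ys = Zf ys xs" unfolding Zf_def ft_def by (intro sum.cong refl) auto

theorem final:
  assumes a: "a < n" and b: "b < n" and al: "0 < \<alpha>" "\<alpha> \<le> 1"
  shows "(\<Sum>xs\<in>paths n n. \<Sum>ys\<in>paths n n. (pn P a xs * \<alpha> ^ cnt v n xs) * (pn P b ys * \<alpha> ^ cnt v n ys) *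
     (if \<exists>t\<in>{T..n}. xs ! t = ys ! t then 1 else 0)) \<ge> ((1 / 4) * \<alpha> powr (48 + 72 * K))\<^sup>2 / (6 + 6 * K)"
proof -
  define \<Omega> where "\<Omega> = paths n n \<times> paths n n"
  define \<mu> where "\<mu> q = pn P a (fst q) * pn P b (snd q)" for q
  define Zq where "Zq q = Zf (fst q) (snd q)" for q
  define Nq where "Nq q = Nr (fst q) + Nr (snd q)" for q
  define Wq where "Wq q = \<alpha> powr Nq q" for q
  have mu0: "\<And>q. 0 \<le> \<mu> q" unfolding \<mu>_def using pnn by simp
  have Z0: "\<And>q. 0 \<le> Zq q" unfolding Zq_def by (rule Zf_nonneg)
  have W0: "\<And>q. 0 \<le> Wq q" unfolding Wq_def by simp
  have W1: "\<And>q. Wq q \<le> 1" unfolding Wq_def Nq_def using al Nr_nonneg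
    by (intro powr_le1) (auto intro: add_nonneg_nonneg)
  have ExP: "Ex a b F = (\<Sum>q\<in>\<Omega>. \<mu> q * F (fst q) (snd q))" for F
    unfolding \<Omega>_def \<mu>_def by (rule Ex_prod)
  have LHS: "(\<Sum>xs\<in>paths n n. \<Sum>ys\<in>paths n n. (pn P a xs * \<alpha> ^ cnt v n xs) * (pn P b ys * \<alpha> ^ cnt v n ys) *
     (if \<exists>t\<in>{T..n}. xs ! t = ys ! t then 1 else 0)) = (\<Sum>q\<in>\<Omega>. \<mu> q * Wq q * (if Zq q > 0 then 1 else 0))"
  proof -
    have pw: "\<alpha> ^ cnt v n xs * \<alpha> ^ cnt v n ys = \<alpha> powr (Nr xs + Nr ys)" for xs ys
      using al by (simp add: powr_add powr_realpow[symmetric] cnt_Nr[symmetric])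
    have "(\<Sum>xs\<in>paths n n. \<Sum>ys\<in>paths n n. (pn P a xs * \<alpha> ^ cnt v n xs) * (pn P b ys * \<alpha> ^ cnt v n ys) *
       (if \<exists>t\<in>{T..n}. xs ! t = ys ! t then 1 else 0))
       = (\<Sum>xs\<in>paths n n. \<Sum>ys\<in>paths n n. (pn P a xs * pn P b ys) * (\<alpha> powr (Nr xs + Nr ys) * (if Zf xs ys > 0 then 1 else 0)))"
      by (intro sum.cong refl) (simp add: pw[symmetric] Zf_pos algebra_simps)
    also have "\<dots> = Ex a b (\<lambda>xs ys. \<alpha> powr (Nr xs + Nr ys) * (if Zf xs ys > 0 then 1 else 0))"
      unfolding Ex_def by (simp add: sum_distrib_left mult.assoc)
    also have "\<dots> = (\<Sum>q\<in>\<Omega>. \<mu> q * Wq q * (if Zq q > 0 then 1 else 0))"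
      unfolding ExP by (simp add: Wq_def Nq_def Zq_def mult.assoc)
    finally show ?thesis .
  qed
  have SZ: "(\<Sum>q\<in>\<Omega>. \<mu> q * Zq q) = Ex a b Zf" unfolding ExP Zq_def ..
  have SZ2: "(\<Sum>q\<in>\<Omega>. \<mu> q * (Zq q)\<^sup>2) = Ex a b (\<lambda>xs ys. (Zf xs ys)\<^sup>2)" unfolding ExP Zq_def ..
  have SZN: "(\<Sum>q\<in>\<Omega>. \<mu> q * Zq q * Nq q) = Ex a b (\<lambda>xs ys. Nr xs * Zf xs ys) + Ex b a (\<lambda>ys xs. Nr ys * Zf ys xs)"
  proof -
    have "(\<Sum>q\<in>\<Omega>. \<mu> q * Zq q * Nq q) = Ex a b (\<lambda>xs ys. Nr xs * Zf xs ys + Nr ys * Zf xs ys)"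
      unfolding ExP Zq_def Nq_def by (intro sum.cong refl) (simp add: algebra_simps)
    also have "\<dots> = Ex a b (\<lambda>xs ys. Nr xs * Zf xs ys) + Ex a b (\<lambda>xs ys. Nr ys * Zf xs ys)" by (rule Ex_add)
    also have "Ex a b (\<lambda>xs ys. Nr ys * Zf xs ys) = Ex b a (\<lambda>ys xs. Nr ys * Zf ys xs)"
      by (subst Ex_swap) (simp add: Zf_sym)
    finally show ?thesis .
  qed
  have z14: "1 / 4 \<le> (\<Sum>q\<in>\<Omega>. \<mu> q * Zq q)" using S1(1)[OF a b] SZ by simp
  have nz: "(\<Sum>q\<in>\<Omega>. \<mu> q * Zq q * Nq q) \<le> 12 + 18 * K" using SZN S3[OF a b] S3[OF b a] by simp
  have nz0: "0 \<le> (\<Sum>q\<in>\<Omega>. \<mu> q * Zq q * Nq q)"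
    using mu0 Z0 Nr_nonneg by (intro sum_nonneg mult_nonneg_nonneg) (auto simp: Nq_def intro: add_nonneg_nonneg)
  define r where "r = (\<Sum>q\<in>\<Omega>. \<mu> q * Zq q * Nq q) / (\<Sum>q\<in>\<Omega>. \<mu> q * Zq q)"
  have rb: "r \<le> 48 + 72 * K"
  proof -
    have "r \<le> (12 + 18 * K) / (1 / 4)"
      unfolding r_def using z14 nz nz0 K_nonneg by (intro frac_le) auto
    then show ?thesis by simp
  qed
  have J: "(\<Sum>q\<in>\<Omega>. \<mu> q * Zq q * \<alpha> powr Nq q) \<ge> (\<Sum>q\<in>\<Omega>. \<mu> q * Zq q) * \<alpha> powr r"
    unfolding r_def using mu0 Z0 al z14 by (intro wJensen) auto
  have "\<alpha> powr (48 + 72 * K) \<le> \<alpha> powr r" using rb al by (intro powr_mono') auto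
  then have c1: "(1 / 4) * \<alpha> powr (48 + 72 * K) \<le> (\<Sum>q\<in>\<Omega>. \<mu> q * Zq q) * \<alpha> powr r"
    using z14 by (intro mult_mono) auto
  define L where "L = (\<Sum>q\<in>\<Omega>. \<mu> q * Wq q * Zq q)"
  have LJ: "L = (\<Sum>q\<in>\<Omega>. \<mu> q * Zq q * \<alpha> powr Nq q)" unfolding L_def Wq_def by (simp add: algebra_simps)
  have cL: "(1 / 4) * \<alpha> powr (48 + 72 * K) \<le> L" using c1 J LJ by simp
  have c0: "0 \<le> (1 / 4) * \<alpha> powr (48 + 72 * K)" by simp
  have CS: "L\<^sup>2 \<le> (\<Sum>q\<in>\<Omega>. \<mu> q * Wq q * (if Zq q > 0 then 1 else 0)) * (\<Sum>q\<in>\<Omega>. \<mu> q * Wq q * (Zq q)\<^sup>2)"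
    unfolding L_def by (rule wCS) (auto simp: mu0 W0 Z0)
  have B: "(\<Sum>q\<in>\<Omega>. \<mu> q * Wq q * (Zq q)\<^sup>2) \<le> 6 + 6 * K"
  proof -
    have "(\<Sum>q\<in>\<Omega>. \<mu> q * Wq q * (Zq q)\<^sup>2) \<le> (\<Sum>q\<in>\<Omega>. \<mu> q * (Zq q)\<^sup>2)"
    proof (intro sum_mono)
      fix q
      have "\<mu> q * Wq q * (Zq q)\<^sup>2 \<le> \<mu> q * 1 * (Zq q)\<^sup>2"
        using mu0 W1 by (intro mult_right_mono mult_left_mono) auto
      then show "\<mu> q * Wq q * (Zq q)\<^sup>2 \<le> \<mu> q * (Zq q)\<^sup>2" by simp
    qed
    also have "\<dots> \<le> 6 + 6 * K" using SZ2 S2[OF a b] by simp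
    finally show ?thesis .
  qed
  define X where "X = (\<Sum>q\<in>\<Omega>. \<mu> q * Wq q * (if Zq q > 0 then 1 else 0))"
  have X0: "0 \<le> X" unfolding X_def using mu0 W0 by (intro sum_nonneg) auto
  have "((1 / 4) * \<alpha> powr (48 + 72 * K))\<^sup>2 \<le> L\<^sup>2" using cL c0 by (intro power_mono) auto
  also have "\<dots> \<le> X * (6 + 6 * K)"
    using CS B X0 unfolding X_def by (meson mult_left_mono order_trans)
  finally have fx: "((1 / 4) * \<alpha> powr (48 + 72 * K))\<^sup>2 \<le> X * (6 + 6 * K)" .
  have pos: "0 < 6 + 6 * K" using K_nonneg by linarith
  have "((1 / 4) * \<alpha> powr (48 + 72 * K))\<^sup>2 / (6 + 6 * K) \<le> X"
    by (rule pos_divide_le_eq[OF pos, THEN iffD2, OF fx])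
  then show ?thesis using LHS unfolding X_def by simp
qed

end


lemma eventually_small:
  fixes r :: real
  assumes r0: "0 \<le> r" and r1: "r < 1"
  shows "\<exists>N. \<forall>n\<ge>N. r ^ (n div 2) \<le> 1 / (2 * real n)"
proof (cases "r = 0")
  case True
  show ?thesis
  proof (intro exI allI impI)
    fix n :: nat assume "2 \<le> n"
    then have "n div 2 \<noteq> 0" by simp
    then show "r ^ (n div 2) \<le> 1 / (2 * real n)" using True by (simp add: power_0_left)
  qed
next
  case False
  define \<sigma> where "\<sigma> = sqrt r"
  have s0: "0 < \<sigma>" using r0 False by (simp add: \<sigma>_def)
  have s1: "\<sigma> < 1" using r0 r1 by (simp add: \<sigma>_def)
  have rs: "r = \<sigma>\<^sup>2" using r0 by (simp add: \<sigma>_def)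
  have "(\<lambda>n. of_nat n * \<sigma> ^ n) \<longlonglongrightarrow> 0" using s0 s1 by (intro powser_times_n_limit_0) simp
  then have "eventually (\<lambda>n. of_nat n * \<sigma> ^ n < \<sigma> / 2) sequentially"
    using s0 by (intro order_tendstoD(2)) auto
  then obtain N where N: "\<And>n. n \<ge> N \<Longrightarrow> real n * \<sigma> ^ n < \<sigma> / 2"
    unfolding eventually_sequentially by auto
  show ?thesis
  proof (intro exI allI impI)
    fix n :: nat assume n: "max N 1 \<le> n"
    have "r ^ (n div 2) = \<sigma> ^ (2 * (n div 2))" by (simp add: rs power_mult)
    also have "\<dots> \<le> \<sigma> ^ (n - 1)" using s0 s1 by (intro power_decreasing) auto
    finally have a: "r ^ (n div 2) \<le> \<sigma> ^ (n - 1)" .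
    have "\<sigma> ^ n = \<sigma> * \<sigma> ^ (n - 1)" using n by (cases n) auto
    then have "real n * (\<sigma> * \<sigma> ^ (n - 1)) < \<sigma> / 2" using N[of n] n by simp
    then have "\<sigma> * (real n * \<sigma> ^ (n - 1)) < \<sigma> * (1 / 2)" by (simp add: algebra_simps)
    then have "real n * \<sigma> ^ (n - 1) < 1 / 2" using s0 by (simp only: mult_less_cancel_left_pos)
    then have "\<sigma> ^ (n - 1) \<le> 1 / (2 * real n)" using n by (simp add: field_simps)
    with a show "r ^ (n div 2) \<le> 1 / (2 * real n)" by simp
  qed
qed

theorem lemma3p4:
  fixes d :: nat and \<rho> :: real
  assumes "d \<ge> 3" and "\<rho> < 1"
  shows "\<exists>c>0. \<exists>N0. \<forall>n\<ge>N0. \<forall>E v u1 u2.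
           regular_graph n d E \<and> spectral_bound n d E \<rho> \<and> v < n \<and> u1 < n \<and> u2 < n
           \<longrightarrow> meet_prob n E v u1 u2 \<ge> c"
proof -
  define r where "r = max \<rho> 0"
  have r0: "0 \<le> r" and r1: "r < 1" using assms by (auto simp: r_def)
  define \<alpha> :: real where "\<alpha> = real d / (d + 1)"
  have al: "0 < \<alpha>" "\<alpha> \<le> 1" using assms by (auto simp: \<alpha>_def)
  define K where "K = 1 / (1 - r)"
  have K0: "0 \<le> K" using r1 by (simp add: K_def)
  define c where "c = ((1 / 4) * \<alpha> powr (48 + 72 * K))\<^sup>2 / (6 + 6 * K)"
  have cpos: "c > 0" using al K0 unfolding c_def by (intro divide_pos_pos) auto
  obtain N1 where N1: "\<And>n. n \<ge> N1 \<Longrightarrow> r ^ (n div 2) \<le> 1 / (2 * real n)"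
    using eventually_small[OF r0 r1] by blast
  show ?thesis
  proof (intro exI[of _ c] conjI cpos exI[of _ "max N1 2"] allI impI)
    fix n E v u1 u2
    assume n: "max N1 2 \<le> n"
      and H: "regular_graph n d E \<and> spectral_bound n d E \<rho> \<and> v < n \<and> u1 < n \<and> u2 < n"
    have reg: "regular_graph n d E" and sb: "spectral_bound n d E \<rho>" and v: "v < n"
      and u1: "u1 < n" and u2: "u2 < n" using H by auto
    have d0: "d > 0" using assms by simp
    have n0: "n > 0" and n2: "2 \<le> n" using n by auto
    have sb': "spectral_bound n d E r"
      using sb unfolding spectral_bound_def r_def by (meson max.coboundedI1)
    interpret stoch n "Pr d E" by (rule Pr_stoch[OF reg d0 n0])
    interpret spec n "Pr d E" r
      by unfold_locales (use r0 r1 trace_bound[OF reg d0 n0 sb'] in auto)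
    interpret msetup n "Pr d E" r v "n div 2"
    proof unfold_locales
      show "v < n" by (rule v)
      show "1 \<le> n div 2" using n2 by simp
      show "n div 2 \<le> n" by simp
      show "r ^ (n div 2) \<le> 1 / real (2 * n)" using N1[of n] n by simp
      show "2 \<le> n" by (rule n2)
      show "n \<le> 2 * (n + 1 - n div 2)" by simp
    qed
    have "meet_prob n E v u1 u2 \<ge> (\<Sum>xs\<in>paths n n. \<Sum>ys\<in>paths n n.
     (pn (Pr d E) u1 xs * \<alpha> ^ cnt v n xs) * (pn (Pr d E) u2 ys * \<alpha> ^ cnt v n ys) *
     (if \<exists>t\<in>{n div 2..n}. xs ! t = ys ! t then 1 else 0))"
      using meet_lower[OF reg d0 v, of u1 u2 "n div 2"] unfolding \<alpha>_def by simp
    moreover have "(\<Sum>xs\<in>paths n n. \<Sum>ys\<in>paths n n.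
     (pn (Pr d E) u1 xs * \<alpha> ^ cnt v n xs) * (pn (Pr d E) u2 ys * \<alpha> ^ cnt v n ys) *
     (if \<exists>t\<in>{n div 2..n}. xs ! t = ys ! t then 1 else 0)) \<ge> c"
      unfolding c_def K_def by (rule final[OF u1 u2 al])
    ultimately show "meet_prob n E v u1 u2 \<ge> c" by linarith
  qed
qed


end
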